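(* (a) Let $G$ be a finite abelian group of order coprime to $p$ and $\bar a=(a_1,\ldots,a_t)\in(\mathcal F(G,K))^t$. Then the space $\ker(\Delta_{\bar a})=\{f\in\mathcal F(G,K): f*a_j=0\ \forall j\}$ is spanned over $K$ by the translates of the traces $\mathrm{Tr}(g^\vee)$ of the $\bar a$-harmonic characters $g^\vee\in G^\vee$. (b) Let $\Lambda$ be a lattice, $\Lambda'\subseteq\Lambda$ a sublattice of finite index coprime to $p$, and $\bar a=(a_1,\ldots,a_t)\in(\mathcal F^0(\Lambda,K))^t$. Then the kernel of $\Delta_{\bar a}$ restricted to $\mathcal F_{\Lambda'}(\Lambda,K)$ is spanned over $K$ by the translates of the traces of the $\bar a$-harmonic characters $g^\vee\in\mathrm{Char}(\Lambda,\bar K^\times)$ with $\Lambda'\subseteq\ker(g^\vee)$.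
   Context: $K=\mathrm{GF}(q)$ with $q=p^r$, $\bar K$ an algebraic closure. For an abelian group $G$, $\mathcal F(G,F)$ and $\mathcal F^0(G,F)$ denote all, resp. finitely supported, functions $G\to F$; $(f*a)(g)=\sum_hf(h)a(g-h)$, $\Delta_af=f*a$, and $\ker\Delta_{\bar a}=\bigcap_j\ker\Delta_{a_j}$. Characters are homomorphisms $G\to\bar K^\times$ ($G^\vee$ for finite $G$, $\mathrm{Char}(\Lambda,\bar K^\times)$ for a lattice $\Lambda$); a character $g^\vee$ is $\bar a$-harmonic if $g^\vee*a_j=0$ for all $j$. For a function $f$ with finitely many values in $\bar K$, let $\mathrm{GF}(q^{r(f)})$ be the smallest subfield of $\bar K$ containing $K$ and all values of $f$, and $\mathrm{Tr}(f)=f+f^q+\cdots+f^{q^{r(f)-1}}$ (powers taken pointwise); it is $K$-valued. Translates of $h$ are the functions $x\mapsto h(x+g)$. $\mathcal F_{\Lambda'}(\Lambda,K)$ is the space of $K$-valued functions on $\Lambda$ invariant under translation by $\Lambda'$. *)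

theory Defs
  imports "HOL-Algebra.Algebraic_Closure_Type" "HOL-Library.Function_Algebras"
          "HOL-Library.Groups_Big_Fun" "HOL-Library.Cardinality"
begin

text \<open>Convolution (f * a)(g) = sum over h of f h * a (g - h); the sum ranges over all h
  (Sum_any: sum of the finitely many nonzero terms).  Used for finite G and for
  finitely supported a on a lattice.\<close>
definition conv :: "('g::ab_group_add \<Rightarrow> 'r::comm_ring_1) \<Rightarrow> ('g \<Rightarrow> 'r) \<Rightarrow> 'g \<Rightarrow> 'r" where
  "conv f a = (\<lambda>g. Sum_any (\<lambda>h. f h * a (g - h)))"

definition is_char :: "('g::ab_group_add \<Rightarrow> 'l::field) \<Rightarrow> bool" where
  "is_char \<chi> \<longleftrightarrow> (\<forall>x. \<chi> x \<noteq> 0) \<and> (\<forall>x y. \<chi> (x + y) = \<chi> x * \<chi> y)"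

definition harmonic :: "nat \<Rightarrow> (nat \<Rightarrow> 'g::ab_group_add \<Rightarrow> 'k::field) \<Rightarrow> ('g \<Rightarrow> 'k alg_closure) \<Rightarrow> bool" where
  "harmonic t a \<chi> \<longleftrightarrow> (\<forall>j<t. conv \<chi> (to_ac \<circ> a j) = (\<lambda>_. 0))"

definition is_subfield :: "'l::field set \<Rightarrow> bool" where
  "is_subfield F \<longleftrightarrow> 0 \<in> F \<and> 1 \<in> F \<and> (\<forall>x\<in>F. \<forall>y\<in>F. x + y \<in> F \<and> x * y \<in> F)
     \<and> (\<forall>x\<in>F. - x \<in> F \<and> inverse x \<in> F)"

definition gen_field :: "('g \<Rightarrow> 'k::field alg_closure) \<Rightarrow> 'k alg_closure set" where
  "gen_field f = \<Inter>{F. is_subfield F \<and> range to_ac \<subseteq> F \<and> range f \<subseteq> F}"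

definition deg_r :: "('g \<Rightarrow> 'k::{field,finite} alg_closure) \<Rightarrow> nat" where
  "deg_r f = (THE r. card (gen_field f) = CARD('k) ^ r)"

definition Tr :: "('g \<Rightarrow> 'k::{field,finite} alg_closure) \<Rightarrow> 'g \<Rightarrow> 'k alg_closure" where
  "Tr f = (\<lambda>x. \<Sum>i<deg_r f. f x ^ (CARD('k) ^ i))"

text \<open>Tr(f) is K-valued; TrK f is that function viewed as a function into K.\<close>
definition TrK :: "('g \<Rightarrow> 'k::{field,finite} alg_closure) \<Rightarrow> 'g \<Rightarrow> 'k" where
  "TrK f = (\<lambda>x. of_ac (Tr f x))"

definition translate :: "('g::ab_group_add \<Rightarrow> 'b) \<Rightarrow> 'g \<Rightarrow> 'g \<Rightarrow> 'b" where
  "translate h g = (\<lambda>x. h (x + g))"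

abbreviation fspan :: "('g \<Rightarrow> 'k::field) set \<Rightarrow> ('g \<Rightarrow> 'k) set" where
  "fspan S \<equiv> Modules.module.span (\<lambda>c f x. c * f x) S"

definition add_subgroup :: "'g::ab_group_add set \<Rightarrow> bool" where
  "add_subgroup H \<longleftrightarrow> 0 \<in> H \<and> (\<forall>x\<in>H. \<forall>y\<in>H. x + y \<in> H) \<and> (\<forall>x\<in>H. - x \<in> H)"

definition subgroup_index :: "'g::ab_group_add set \<Rightarrow> nat" where
  "subgroup_index H = card ((\<lambda>x. (+) x ` H) ` UNIV)"

end

theory Submission
  imports Defs "HOL-Computational_Algebra.Computational_Algebra"
begin


lemma kpow: "(x::'k::{field,finite}) ^ CARD('k) = x"
proof (cases "x = 0")
  case False
  have "x * (\<Prod>y\<in>UNIV-{0}. x * y) = x * x ^ (card (UNIV :: 'k set) - 1) * \<Prod>(UNIV-{0})"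
    by (simp add: prod.distrib mult_ac)
  also have "x * x ^ (card (UNIV :: 'k set) - 1) = x ^ Suc (card (UNIV :: 'k set) - 1)"
    by (subst power_Suc) auto
  also have "Suc (card (UNIV :: 'k set) - 1) = card (UNIV :: 'k set)"
    using finite_UNIV_card_ge_0[where ?'a = 'k] by simp
  also have "(\<Prod>y\<in>UNIV-{0}. x * y) = (\<Prod>y\<in>UNIV-{0}. y)"
    by (rule prod.reindex_bij_witness[of _ "\<lambda>y. y / x" "\<lambda>y. x * y"]) (use False in auto)
  finally show ?thesis
    by simp
qed (use finite_UNIV_card_ge_0[where ?'a = 'k] in auto)

lemma card_k_ge2: "CARD('k::{field,finite}) \<ge> 2"
proof -
  have "card {0::'k, 1} \<le> CARD('k)" by (rule card_mono) auto
  thus ?thesis by simp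
qed

lemma choose_zero_k:
  assumes "0 < k" "k < CARD('k::{field,finite})"
  shows "of_nat (CARD('k) choose k) = (0::'k)"
proof -
  define q where "q = CARD('k)"
  define P :: "'k poly" where "P = (\<Sum>i\<in>{1..<q}. monom (of_nat (q choose i)) i)"
  have cP: "coeff P j = (if j \<in> {1..<q} then of_nat (q choose j) else 0)" for j
    unfolding P_def coeff_sum coeff_monom
    by (cases "j \<in> {1..<q}") (auto intro: sum.neutral)
  have root: "poly P x = 0" for x :: 'k
  proof -
    have "(x + 1) ^ q = (\<Sum>i\<le>q. of_nat (q choose i) * x ^ i * 1 ^ (q - i))"
      by (rule binomial_ring)
    also have "\<dots> = (\<Sum>i\<in>insert 0 (insert q {1..<q}). of_nat (q choose i) * x ^ i)"
      by (intro sum.cong) auto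
    also have "\<dots> = 1 + x ^ q + (\<Sum>i\<in>{1..<q}. of_nat (q choose i) * x ^ i)"
      using card_k_ge2[where 'k='k] unfolding q_def[symmetric] by (subst sum.insert; auto)+
    finally have "(x+1)^q = 1 + x ^ q + poly P x"
      unfolding P_def poly_sum poly_monom by simp
    thus ?thesis using kpow[of x] kpow[of "x+1"] unfolding q_def by simp
  qed
  have "P = 0"
  proof (rule ccontr)
    assume "P \<noteq> 0"
    hence "card {x. poly P x = 0} \<le> degree P" by (rule card_poly_roots_bound)
    moreover have "degree P \<le> q - 1"
      by (rule degree_le) (auto simp: cP)
    moreover have "{x. poly P x = 0} = UNIV" using root by auto
    ultimately show False using card_k_ge2[where 'k='k] unfolding q_def by simp
  qed
  hence "coeff P k = 0" by simp
  thus ?thesis using assms by (simp add: cP q_def)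
qed

lemma choose_zero_L:
  assumes "0 < k" "k < CARD('k::{field,finite})"
  shows "of_nat (CARD('k) choose k) = (0::'k alg_closure)"
  using choose_zero_k[OF assms] by (metis to_ac_0 to_ac_of_nat)

lemma frob_add: "(x + y :: 'k::{field,finite} alg_closure) ^ CARD('k) = x ^ CARD('k) + y ^ CARD('k)"
proof -
  define q where "q = CARD('k)"
  have q2: "q \<ge> 2" using card_k_ge2[where 'k='k] by (simp add: q_def)
  have "(x + y) ^ q = (\<Sum>i\<le>q. of_nat (q choose i) * x ^ i * y ^ (q - i))"
    by (rule binomial_ring)
  also have "\<dots> = (\<Sum>i\<in>insert 0 (insert q {1..<q}). of_nat (q choose i) * x ^ i * y ^ (q - i))"
    by (intro sum.cong) auto
  also have "\<dots> = y ^ q + x ^ q + (\<Sum>i\<in>{1..<q}. of_nat (q choose i) * x ^ i * y ^ (q - i))"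
    using q2 by (subst sum.insert; auto)+
  also have "(\<Sum>i\<in>{1..<q}. of_nat (q choose i) * x ^ i * y ^ (q - i)) = 0"
    by (intro sum.neutral) (auto simp: q_def choose_zero_L)
  finally show ?thesis by (simp add: q_def add_ac)
qed

lemma qpow_add: "(x + y :: 'k::{field,finite} alg_closure) ^ (CARD('k) ^ i) = x ^ (CARD('k)^i) + y ^ (CARD('k)^i)"
proof (induction i)
  case (Suc i)
  have "(x + y) ^ (CARD('k) ^ Suc i) = ((x + y) ^ (CARD('k) ^ i)) ^ CARD('k)"
    by (simp only: power_Suc2 power_mult)
  also have "\<dots> = (x ^ (CARD('k)^i)) ^ CARD('k) + (y ^ (CARD('k)^i)) ^ CARD('k)"
    by (simp add: Suc frob_add)
  finally show ?case by (simp only: power_Suc2 power_mult)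
qed simp

lemma qpow_sum: "(\<Sum>a\<in>A. f a :: 'k::{field,finite} alg_closure) ^ (CARD('k) ^ i) = (\<Sum>a\<in>A. f a ^ (CARD('k)^i))"
  by (induction A rule: infinite_finite_induct) (auto simp: qpow_add)

lemma qpow_diff: "(x - y :: 'k::{field,finite} alg_closure) ^ (CARD('k) ^ i) = x ^ (CARD('k)^i) - y ^ (CARD('k)^i)"
  using qpow_add[of "x - y" y i] by (simp add: algebra_simps)

lemma qpow_minus: "(- y :: 'k::{field,finite} alg_closure) ^ (CARD('k) ^ i) = - (y ^ (CARD('k)^i))"
  using qpow_diff[of 0 y i] by simp

lemma qpow_inj: "(x :: 'k::{field,finite} alg_closure) ^ (CARD('k) ^ i) = y ^ (CARD('k) ^ i) \<Longrightarrow> x = y"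
  using qpow_diff[of x y i] by simp

lemma to_ac_qpow: "to_ac (c::'k::{field,finite}) ^ (CARD('k) ^ i) = to_ac c"
proof (induction i)
  case (Suc i)
  have "to_ac c ^ (CARD('k) ^ Suc i) = (to_ac c ^ (CARD('k) ^ i)) ^ CARD('k)"
    by (simp only: power_Suc2 power_mult)
  also have "\<dots> = to_ac (c ^ CARD('k))" by (simp add: Suc)
  finally show ?case by (simp add: kpow)
qed simp

lemma roots_card_le:
  assumes "n \<ge> 2"
  shows "finite {z::'a::field. z ^ n = z} \<and> card {z::'a. z ^ n = z} \<le> n"
proof -
  define P :: "'a poly" where "P = monom 1 n - [:0,1:]"
  obtain m where m: "n = Suc (Suc m)" using assms by (metis add_2_eq_Suc le_Suc_ex)
  have cP: "coeff P n = 1" using assms by (simp add: P_def coeff_monom m)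
  hence P0: "P \<noteq> 0" by auto
  have dP: "degree P \<le> n"
    unfolding P_def using assms by (intro degree_diff_le) (auto simp: degree_monom_le)
  have eq: "{z. z ^ n = z} = {x. poly P x = 0}" by (auto simp: P_def poly_monom)
  show ?thesis unfolding eq using poly_roots_finite[OF P0] card_poly_roots_bound[OF P0] dP by auto
qed

lemma roots1_finite:
  assumes "n > 0"
  shows "finite {z::'a::field. z ^ n = 1}"
proof -
  define P :: "'a poly" where "P = monom 1 n - 1"
  have cP: "coeff P n = 1" using assms by (simp add: P_def coeff_monom)
  hence P0: "P \<noteq> 0" by auto
  have eq: "{z. z ^ n = 1} = {x. poly P x = 0}" by (auto simp: P_def poly_monom)
  show ?thesis unfolding eq using poly_roots_finite[OF P0] by auto
qed

lemma range_to_ac_iff: "(z::'k::{field,finite} alg_closure) \<in> range to_ac \<longleftrightarrow> z ^ CARD('k) = z"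
proof
  assume "z \<in> range to_ac" thus "z ^ CARD('k) = z" using to_ac_qpow[of _ 1] by auto
next
  assume z: "z ^ CARD('k) = z"
  have fin: "finite {z::'k alg_closure. z ^ CARD('k) = z}" and c: "card {z::'k alg_closure. z ^ CARD('k) = z} \<le> CARD('k)"
    using roots_card_le[OF card_k_ge2] by auto
  have sub: "range to_ac \<subseteq> {z::'k alg_closure. z ^ CARD('k) = z}" using to_ac_qpow[of _ 1] by auto
  have "card (range (to_ac::'k \<Rightarrow> _)) = CARD('k)" by (rule card_image) (simp add: inj_to_ac)
  moreover have "card (range (to_ac::'k \<Rightarrow> _)) \<le> card {z::'k alg_closure. z ^ CARD('k) = z}"
    by (rule card_mono[OF fin sub])
  ultimately have "range to_ac = {z::'k alg_closure. z ^ CARD('k) = z}"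
    using card_subset_eq[OF fin sub] c by simp
  thus "z \<in> range to_ac" using z by auto
qed



lemma vs_ac: "vector_space (\<lambda>(c::'k::field) (z::'k alg_closure). to_ac c * z)"
  by unfold_locales (auto simp: algebra_simps)

lemma card_span_indep:
  fixes B :: "'k::{field,finite} alg_closure set"
  assumes "finite B" "\<not> module.dependent (\<lambda>c z. to_ac c * z) B"
  shows "card (module.span (\<lambda>(c::'k) z. to_ac c * z) B) = CARD('k) ^ card B"
  using assms
proof (induction B rule: finite_induct)
  case empty
  interpret V: vector_space "\<lambda>(c::'k) (z::'k alg_closure). to_ac c * z" by (rule vs_ac)
  show ?case by simp
next
  case (insert b B)
  interpret V: vector_space "\<lambda>(c::'k) (z::'k alg_closure). to_ac c * z" by (rule vs_ac)
  have indB: "V.independent B" and bnot: "b \<notin> V.span B"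
    using insert.prems insert.hyps V.independent_insert by auto
  have cB: "card (V.span B) = CARD('k) ^ card B" using insert.IH indB by simp
  hence finB: "finite (V.span B)" by (metis card_eq_0_iff power_not_zero finite_UNIV_card_ge_0 finite_class.finite_UNIV less_irrefl)
  have img: "V.span (insert b B) = (\<lambda>(c,v). to_ac c * b + v) ` (UNIV \<times> V.span B)"
  proof
    show "V.span (insert b B) \<subseteq> (\<lambda>(c,v). to_ac c * b + v) ` (UNIV \<times> V.span B)"
    proof
      fix x assume "x \<in> V.span (insert b B)"
      then obtain k where "x - to_ac k * b \<in> V.span B" unfolding V.span_insert by auto
      thus "x \<in> (\<lambda>(c,v). to_ac c * b + v) ` (UNIV \<times> V.span B)"
        by (intro image_eqI[of _ _ "(k, x - to_ac k * b)"]) auto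
    qed
  next
    show "(\<lambda>(c,v). to_ac c * b + v) ` (UNIV \<times> V.span B) \<subseteq> V.span (insert b B)"
      unfolding V.span_insert by clarsimp (metis add_diff_cancel_left')
  qed
  have inj: "inj_on (\<lambda>(c,v). to_ac c * b + v) (UNIV \<times> V.span B)"
  proof (rule inj_onI, clarify)
    fix c v c' v' assume v: "v \<in> V.span B" and v': "v' \<in> V.span B"
      and eq: "to_ac c * b + v = to_ac c' * b + v'"
    have "to_ac (c - c') * b = v' - v" using eq by (simp add: algebra_simps)
    also have "\<dots> \<in> V.span B" using v v' by (simp add: V.span_diff)
    finally have m: "to_ac (c - c') * b \<in> V.span B" .
    show "c = c' \<and> v = v'"
    proof (cases "c = c'")
      case True thus ?thesis using eq by simp
    next
      case False
      have "to_ac (inverse (c - c')) * (to_ac (c - c') * b) \<in> V.span B"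
        using V.span_scale[OF m, of "inverse (c - c')"] by (simp only:)
      hence "b \<in> V.span B" using False by (simp add: mult.assoc[symmetric] flip: to_ac_mult)
      thus ?thesis using bnot by simp
    qed
  qed
  have "card (V.span (insert b B)) = card ((UNIV::'k set) \<times> V.span B)"
    unfolding img using card_image[OF inj] by simp
  also have "\<dots> = CARD('k) * card (V.span B)" by (simp add: card_cartesian_product)
  finally show ?case using cB insert.hyps by simp
qed

lemma is_subfield_UNIV: "is_subfield UNIV" by (simp add: is_subfield_def)

lemma gen_field_props:
  shows "is_subfield (gen_field f)" "range to_ac \<subseteq> gen_field f" "range f \<subseteq> gen_field f"
    "\<And>F. is_subfield F \<Longrightarrow> range to_ac \<subseteq> F \<Longrightarrow> range f \<subseteq> F \<Longrightarrow> gen_field f \<subseteq> F"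
  unfolding gen_field_def is_subfield_def by blast+

lemma subfield_card:
  fixes F :: "'k::{field,finite} alg_closure set"
  assumes "finite F" "is_subfield F" "range to_ac \<subseteq> F"
  shows "\<exists>d. card F = CARD('k) ^ d"
proof -
  interpret V: vector_space "\<lambda>(c::'k) (z::'k alg_closure). to_ac c * z" by (rule vs_ac)
  obtain B where B: "B \<subseteq> F" "V.independent B" "F \<subseteq> V.span B"
    using V.maximal_independent_subset by blast
  have sub: "V.subspace F"
    using assms(2,3) unfolding V.subspace_def is_subfield_def by auto
  have "V.span B \<subseteq> F" using V.span_minimal[OF B(1) sub] .
  hence "F = V.span B" using B by auto
  moreover have "finite B" using B(1) assms(1) finite_subset by auto
  ultimately show ?thesis using card_span_indep[OF _ B(2)] by auto
qed

lemma subfield_pow_card: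
  fixes F :: "'a::field set"
  assumes "finite F" "is_subfield F" "z \<in> F"
  shows "z ^ card F = z"
proof (cases "z = 0")
  case True
  have "card F > 0" using assms by (auto simp: card_gt_0_iff)
  thus ?thesis using True by simp
next
  case False
  have inF: "x \<in> F \<Longrightarrow> y \<in> F \<Longrightarrow> x * y \<in> F" "x \<in> F \<Longrightarrow> inverse x \<in> F" for x y
    using assms(2) unfolding is_subfield_def by auto
  have F0: "0 \<in> F" using assms(2) unfolding is_subfield_def by auto
  have "(\<Prod>y\<in>F-{0}. z * y) = z ^ card (F - {0}) * \<Prod>(F-{0})"
    by (simp add: prod.distrib)
  moreover have "(\<Prod>y\<in>F-{0}. z * y) = (\<Prod>y\<in>F-{0}. y)"
    by (rule prod.reindex_bij_witness[of _ "\<lambda>y. y / z" "\<lambda>y. z * y"])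
       (use False assms(3) in \<open>auto simp: inF divide_inverse mult.commute\<close>)
  moreover have "\<Prod>(F-{0}) \<noteq> 0" using assms(1) by simp
  ultimately have "z ^ card (F - {0}) = 1" by simp
  moreover have "card F = Suc (card (F - {0}))"
    using assms(1) F0 by (metis card_Suc_Diff1)
  ultimately show ?thesis by simp
qed

lemma Fix_subfield: "is_subfield {z::'k::{field,finite} alg_closure. z ^ (CARD('k) ^ s) = z}"
  unfolding is_subfield_def
  by (auto simp: qpow_add qpow_minus power_mult_distrib power_inverse)



definition frobs :: "nat \<Rightarrow> ('g \<Rightarrow> 'k::{field,finite} alg_closure) \<Rightarrow> 'g \<Rightarrow> 'k alg_closure" where
  "frobs i \<chi> = (\<lambda>x. \<chi> x ^ (CARD('k) ^ i))"

definition sper :: "('g \<Rightarrow> 'k::{field,finite} alg_closure) \<Rightarrow> nat" where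
  "sper \<chi> = (LEAST s. 0 < s \<and> frobs s \<chi> = \<chi>)"

lemma frobs_0[simp]: "frobs 0 \<chi> = \<chi>" by (simp add: frobs_def)

lemma frobs_frobs: "frobs i (frobs j \<chi>) = frobs (i + j) \<chi>"
  by (simp add: frobs_def power_mult[symmetric] power_add mult.commute)

lemma frobs_mult_period: "frobs s \<chi> = \<chi> \<Longrightarrow> frobs (k * s) \<chi> = \<chi>"
proof (induction k)
  case (Suc k)
  have "frobs (Suc k * s) \<chi> = frobs s (frobs (k * s) \<chi>)" by (simp add: frobs_frobs add.commute)
  thus ?case using Suc by simp
qed simp

lemma frobs_mod: "frobs s \<chi> = \<chi> \<Longrightarrow> frobs (i mod s) \<chi> = frobs i \<chi>"
proof -
  assume a: "frobs s \<chi> = \<chi>"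
  have "frobs i \<chi> = frobs (i mod s) (frobs ((i div s) * s) \<chi>)"
    by (simp add: frobs_frobs)
  thus ?thesis using frobs_mult_period[OF a] by simp
qed

lemma frobs_inj: "frobs i \<chi> = frobs i \<psi> \<Longrightarrow> \<chi> = \<psi>"
  unfolding frobs_def by (rule ext) (metis qpow_inj)

lemma sper_props:
  assumes "\<exists>s>0. frobs s \<chi> = \<chi>"
  shows "0 < sper \<chi>" "frobs (sper \<chi>) \<chi> = \<chi>" "\<And>t. 0 < t \<Longrightarrow> t < sper \<chi> \<Longrightarrow> frobs t \<chi> \<noteq> \<chi>"
proof -
  have *: "0 < sper \<chi> \<and> frobs (sper \<chi>) \<chi> = \<chi>"
    unfolding sper_def using LeastI_ex[OF assms] by simp
  thus "0 < sper \<chi>" "frobs (sper \<chi>) \<chi> = \<chi>" by auto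
  show "\<And>t. 0 < t \<Longrightarrow> t < sper \<chi> \<Longrightarrow> frobs t \<chi> \<noteq> \<chi>"
    unfolding sper_def using not_less_Least by blast
qed

lemma deg_r_eq:
  fixes \<chi> :: "'g \<Rightarrow> 'k::{field,finite} alg_closure"
  assumes ex: "\<exists>s>0. frobs s \<chi> = \<chi>"
  shows "deg_r \<chi> = sper \<chi>"
proof -
  define s where "s = sper \<chi>"
  define q where "q = CARD('k)"
  have q2: "q \<ge> 2" using card_k_ge2[where 'k='k] by (simp add: q_def)
  have s0: "0 < s" and fs: "frobs s \<chi> = \<chi>" and mins: "\<And>t. 0 < t \<Longrightarrow> t < s \<Longrightarrow> frobs t \<chi> \<noteq> \<chi>"
    using sper_props[OF ex] unfolding s_def by auto
  define Fx where "Fx = {z::'k alg_closure. z ^ (q ^ s) = z}"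
  have "q ^ 1 \<le> q ^ s" by (rule power_increasing) (use s0 q2 in auto)
  hence qs2: "q ^ s \<ge> 2" using q2 by simp
  have finFx: "finite Fx" and cFx: "card Fx \<le> q ^ s"
    using roots_card_le[OF qs2] unfolding Fx_def by auto
  have sub: "gen_field \<chi> \<subseteq> Fx"
  proof (rule gen_field_props(4))
    show "is_subfield Fx" unfolding Fx_def q_def by (rule Fix_subfield)
    show "range to_ac \<subseteq> Fx" unfolding Fx_def q_def using to_ac_qpow by auto
    show "range \<chi> \<subseteq> Fx" unfolding Fx_def q_def using fs by (auto simp: frobs_def fun_eq_iff)
  qed
  have finF: "finite (gen_field \<chi>)" using finite_subset[OF sub finFx] .
  have cF: "card (gen_field \<chi>) \<le> q ^ s" using card_mono[OF finFx sub] cFx by linarith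
  obtain d where d: "card (gen_field \<chi>) = q ^ d"
    using subfield_card[OF finF gen_field_props(1,2)] unfolding q_def by blast
  have "{0, 1} \<subseteq> gen_field \<chi>" using gen_field_props(1) unfolding is_subfield_def by auto
  hence "card {0::'k alg_closure, 1} \<le> card (gen_field \<chi>)" using finF by (rule card_mono[rotated])
  hence "2 \<le> q ^ d" using d by simp
  hence d0: "d > 0" by (cases d) auto
  have "frobs d \<chi> = \<chi>"
  proof
    fix x
    have "\<chi> x \<in> gen_field \<chi>" using gen_field_props(3)[of \<chi>] by blast
    from subfield_pow_card[OF finF gen_field_props(1) this] show "frobs d \<chi> x = \<chi> x"
      unfolding frobs_def d q_def .
  qed
  hence "s \<le> d" using mins d0 by (meson not_less)
  moreover have "d \<le> s"
  proof -
    have "q ^ d \<le> q ^ s" using cF d by simp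
    moreover have "1 < q" using q2 by simp
    ultimately show ?thesis using power_le_imp_le_exp by blast
  qed
  ultimately have ds: "d = s" by simp
  have "deg_r \<chi> = (THE r. card (gen_field \<chi>) = q ^ r)" unfolding deg_r_def q_def ..
  also have "\<dots> = s"
  proof (rule the_equality)
    show "card (gen_field \<chi>) = q ^ s" using d ds by simp
    fix r assume "card (gen_field \<chi>) = q ^ r"
    hence "q ^ r = q ^ s" using d ds by simp
    moreover have "1 < q" using q2 by simp
    ultimately show "r = s" using power_inject_exp by blast
  qed
  finally show ?thesis unfolding s_def .
qed

lemma Tr_eq:
  fixes \<chi> :: "'g \<Rightarrow> 'k::{field,finite} alg_closure"
  assumes ex: "\<exists>s>0. frobs s \<chi> = \<chi>"
  shows "Tr \<chi> = (\<lambda>x. \<Sum>i<sper \<chi>. frobs i \<chi> x)"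
  unfolding Tr_def deg_r_eq[OF ex] frobs_def ..

lemma Tr_range:
  fixes \<chi> :: "'g \<Rightarrow> 'k::{field,finite} alg_closure"
  assumes ex: "\<exists>s>0. frobs s \<chi> = \<chi>"
  shows "Tr \<chi> x \<in> range to_ac"
proof -
  define s where "s = sper \<chi>"
  define q where "q = CARD('k)"
  have fs: "frobs s \<chi> = \<chi>" using sper_props[OF ex] unfolding s_def by auto
  define f where "f = (\<lambda>i. \<chi> x ^ (q ^ i))"
  have "Tr \<chi> x ^ q = (\<Sum>i<s. f i) ^ (q ^ 1)" unfolding Tr_eq[OF ex] s_def f_def frobs_def q_def by simp
  also have "\<dots> = (\<Sum>i<s. f i ^ (q ^ 1))" unfolding q_def by (rule qpow_sum)
  also have "\<dots> = (\<Sum>i<s. f (Suc i))"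
    unfolding f_def by (simp only: power_one_right power_Suc2 power_mult)
  also have "\<dots> = (\<Sum>i<s. f i)"
  proof -
    have "f s = f 0" using fs unfolding f_def frobs_def q_def by (simp add: fun_eq_iff)
    have "(\<Sum>i<Suc s. f i) = f 0 + (\<Sum>i<s. f (Suc i))" by (rule sum.lessThan_Suc_shift)
    moreover have "(\<Sum>i<Suc s. f i) = (\<Sum>i<s. f i) + f s" by simp
    ultimately show ?thesis using \<open>f s = f 0\<close> by (simp add: add.commute)
  qed
  also have "\<dots> = Tr \<chi> x" unfolding Tr_eq[OF ex] s_def f_def frobs_def q_def ..
  finally show ?thesis unfolding range_to_ac_iff q_def .
qed

lemma to_ac_TrK:
  assumes ex: "\<exists>s>0. frobs s \<chi> = \<chi>"
  shows "to_ac (TrK \<chi> x) = Tr \<chi> x"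
  unfolding TrK_def using Tr_range[OF ex] by (rule to_ac_of_ac)



definition orbit :: "('g \<Rightarrow> 'k::{field,finite} alg_closure) \<Rightarrow> ('g \<Rightarrow> 'k alg_closure) set" where
  "orbit \<chi> = range (\<lambda>i. frobs i \<chi>)"

definition canon :: "('g \<Rightarrow> 'k::{field,finite} alg_closure) \<Rightarrow> ('g \<Rightarrow> 'k alg_closure)" where
  "canon \<chi> = (SOME \<psi>. \<psi> \<in> orbit \<chi>)"

lemma self_in_orbit: "\<chi> \<in> orbit \<chi>"
  unfolding orbit_def by (rule range_eqI[of _ _ 0]) simp

lemma canon_in_orbit: "canon \<chi> \<in> orbit \<chi>"
  unfolding canon_def by (rule someI[where x=\<chi>], rule self_in_orbit)

lemma orbit_same:
  assumes ex: "\<exists>s>0. frobs s \<chi> = \<chi>" and psi: "\<psi> \<in> orbit \<chi>"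
  shows "orbit \<psi> = orbit \<chi>"
proof -
  obtain s where s: "s > 0" "frobs s \<chi> = \<chi>" using ex by auto
  obtain i where i: "\<psi> = frobs i \<chi>" using psi unfolding orbit_def by auto
  show ?thesis
  proof
    show "orbit \<psi> \<subseteq> orbit \<chi>" unfolding orbit_def i by (auto simp: frobs_frobs)
    show "orbit \<chi> \<subseteq> orbit \<psi>"
    proof
      fix \<phi> assume "\<phi> \<in> orbit \<chi>"
      then obtain j where j: "\<phi> = frobs j \<chi>" unfolding orbit_def by auto
      have "frobs (j + (s - 1) * i) \<psi> = frobs j (frobs (i * s) \<chi>)"
      proof -
        have e: "j + (s - 1) * i + i = j + i * s" using s(1) by (cases s) (auto simp: algebra_simps)
        show ?thesis unfolding i frobs_frobs e ..
      qed
      also have "\<dots> = \<phi>" using frobs_mult_period[OF s(2)] j by simp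
      finally show "\<phi> \<in> orbit \<psi>" unfolding orbit_def by (metis rangeI)
    qed
  qed
qed

lemma orbit_sum:
  assumes ex: "\<exists>s>0. frobs s \<chi> = \<chi>"
  shows "(\<Sum>\<psi>\<in>orbit \<chi>. \<psi> y) = Tr \<chi> y"
proof -
  define s where "s = sper \<chi>"
  have s0: "0 < s" and fs: "frobs s \<chi> = \<chi>" and mins: "\<And>t. 0 < t \<Longrightarrow> t < s \<Longrightarrow> frobs t \<chi> \<noteq> \<chi>"
    using sper_props[OF ex] unfolding s_def by auto
  have img: "orbit \<chi> = (\<lambda>i. frobs i \<chi>) ` {..<s}"
  proof
    show "orbit \<chi> \<subseteq> (\<lambda>i. frobs i \<chi>) ` {..<s}"
    proof
      fix \<phi> assume "\<phi> \<in> orbit \<chi>"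
      then obtain j where j: "\<phi> = frobs j \<chi>" unfolding orbit_def by auto
      hence "\<phi> = frobs (j mod s) \<chi>" using frobs_mod[OF fs] by simp
      thus "\<phi> \<in> (\<lambda>i. frobs i \<chi>) ` {..<s}" using s0 by auto
    qed
  qed (auto simp: orbit_def)
  have inj: "inj_on (\<lambda>i. frobs i \<chi>) {..<s}"
  proof (rule inj_onI)
    have one: "i < j \<Longrightarrow> j < s \<Longrightarrow> frobs i \<chi> \<noteq> frobs j \<chi>" for i j
    proof
      assume ij: "i < j" "j < s" and eq: "frobs i \<chi> = frobs j \<chi>"
      have "frobs j \<chi> = frobs i (frobs (j - i) \<chi>)" using ij by (simp add: frobs_frobs)
      hence "\<chi> = frobs (j - i) \<chi>" using eq frobs_inj by metis
      moreover have "frobs (j - i) \<chi> \<noteq> \<chi>" using mins[of "j - i"] ij by simp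
      ultimately show False by simp
    qed
    fix i j assume "i \<in> {..<s}" "j \<in> {..<s}" "frobs i \<chi> = frobs j \<chi>"
    thus "i = j" using one[of i j] one[of j i] by (metis lessThan_iff linorder_neqE_nat)
  qed
  have "(\<Sum>\<psi>\<in>orbit \<chi>. \<psi> y) = (\<Sum>i<s. frobs i \<chi> y)"
    unfolding img by (subst sum.reindex[OF inj]) simp
  also have "\<dots> = Tr \<chi> y" unfolding Tr_eq[OF ex] s_def ..
  finally show ?thesis .
qed

lemma orbit_decomp:
  fixes H :: "('g \<Rightarrow> 'k::{field,finite} alg_closure) set"
  assumes fin: "finite H" and per: "\<And>\<chi>. \<chi> \<in> H \<Longrightarrow> \<exists>s>0. frobs s \<chi> = \<chi>"
    and cl: "\<And>\<chi> i. \<chi> \<in> H \<Longrightarrow> frobs i \<chi> \<in> H"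
  shows "(\<Sum>\<chi>\<in>H. \<chi> y) = (\<Sum>\<rho>\<in>canon ` H. Tr \<rho> y)"
proof -
  have orbH: "\<chi> \<in> H \<Longrightarrow> orbit \<chi> \<subseteq> H" for \<chi> using cl unfolding orbit_def by auto
  have fib: "{\<chi>\<in>H. canon \<chi> = \<rho>} = orbit \<rho>" if rho: "\<rho> \<in> canon ` H" for \<rho>
  proof -
    obtain \<chi>0 where c0: "\<chi>0 \<in> H" "\<rho> = canon \<chi>0" using rho by blast
    have r0: "\<rho> \<in> orbit \<chi>0" using c0 canon_in_orbit by simp
    have orr: "orbit \<rho> = orbit \<chi>0" by (rule orbit_same[OF per[OF c0(1)] r0])
    have rH: "\<rho> \<in> H" using orbH[OF c0(1)] r0 by auto
    show ?thesis
    proof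
      show "{\<chi>\<in>H. canon \<chi> = \<rho>} \<subseteq> orbit \<rho>"
      proof clarify
        fix \<chi> assume "\<chi> \<in> H" "\<rho> = canon \<chi>"
        hence "\<rho> \<in> orbit \<chi>" using canon_in_orbit by simp
        hence "orbit \<rho> = orbit \<chi>" using orbit_same per \<open>\<chi> \<in> H\<close> by blast
        thus "\<chi> \<in> orbit (canon \<chi>)" using self_in_orbit \<open>\<rho> = canon \<chi>\<close> by metis
      qed
      show "orbit \<rho> \<subseteq> {\<chi>\<in>H. canon \<chi> = \<rho>}"
      proof clarify
        fix \<chi> assume chi: "\<chi> \<in> orbit \<rho>"
        have "\<chi> \<in> H" using orbH[OF rH] chi by auto
        moreover have "orbit \<chi> = orbit \<chi>0" using orbit_same[OF per[OF rH] chi] orr by simp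
        hence "canon \<chi> = \<rho>" unfolding c0(2) canon_def by simp
        ultimately show "\<chi> \<in> H \<and> canon \<chi> = \<rho>" by simp
      qed
    qed
  qed
  have "(\<Sum>\<chi>\<in>H. \<chi> y) = (\<Sum>\<rho>\<in>canon ` H. \<Sum>\<chi>\<in>{\<chi>\<in>H. canon \<chi> = \<rho>}. \<chi> y)"
    by (rule sum.group[symmetric]) (use fin in auto)
  also have "\<dots> = (\<Sum>\<rho>\<in>canon ` H. \<Sum>\<chi>\<in>orbit \<rho>. \<chi> y)"
    by (rule sum.cong[OF refl], rule arg_cong[where f="\<lambda>A. sum _ A"], rule fib)
  also have "\<dots> = (\<Sum>\<rho>\<in>canon ` H. Tr \<rho> y)"
  proof (rule sum.cong[OF refl])
    fix \<rho> assume "\<rho> \<in> canon ` H"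
    then obtain \<chi>0 where c0: "\<chi>0 \<in> H" "\<rho> = canon \<chi>0" by auto
    have "\<rho> \<in> H" using orbH[OF c0(1)] canon_in_orbit c0 by auto
    show "(\<Sum>\<chi>\<in>orbit \<rho>. \<chi> y) = Tr \<rho> y" by (rule orbit_sum[OF per[OF \<open>\<rho> \<in> H\<close>]])
  qed
  finally show ?thesis .
qed



definition nsm :: "nat \<Rightarrow> 'g::ab_group_add \<Rightarrow> 'g" where
  "nsm k x = (\<Sum>i<k. x)"

lemma nsm_0[simp]: "nsm 0 x = 0" by (simp add: nsm_def)
lemma nsm_Suc: "nsm (Suc k) x = x + nsm k x" by (simp add: nsm_def add.commute)
lemma nsm_1[simp]: "nsm 1 x = x" by (simp add: nsm_def)
lemma nsm_add: "nsm (a + b) x = nsm a x + nsm b x"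
  by (induction a) (auto simp: nsm_Suc add.assoc)
lemma nsm_mult: "nsm (a * b) x = nsm a (nsm b x)"
  by (induction a) (auto simp: nsm_Suc nsm_add)
lemma nsm_distrib: "nsm k (x + y) = nsm k x + nsm k y"
  by (induction k) (auto simp: nsm_Suc algebra_simps)
lemma nsm_zero[simp]: "nsm k 0 = 0" by (simp add: nsm_def)
lemma sum_const_nsm: "finite A \<Longrightarrow> (\<Sum>a\<in>A. y) = nsm (card A) y"
  by (induction A rule: finite_induct) (auto simp: nsm_Suc)

lemma asg_0: "add_subgroup H \<Longrightarrow> 0 \<in> H" by (simp add: add_subgroup_def)
lemma asg_add: "add_subgroup H \<Longrightarrow> x \<in> H \<Longrightarrow> y \<in> H \<Longrightarrow> x + y \<in> H" by (simp add: add_subgroup_def)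
lemma asg_neg: "add_subgroup H \<Longrightarrow> x \<in> H \<Longrightarrow> - x \<in> H" by (simp add: add_subgroup_def)
lemma asg_neg_iff: "add_subgroup H \<Longrightarrow> - x \<in> H \<longleftrightarrow> x \<in> H"
  using asg_neg[of H "-x"] asg_neg[of H x] by auto
lemma asg_diff: "add_subgroup H \<Longrightarrow> x \<in> H \<Longrightarrow> y \<in> H \<Longrightarrow> x - y \<in> H"
  unfolding diff_conv_add_uminus by (intro asg_add asg_neg)
lemma asg_sum:
  assumes H: "add_subgroup H" shows "(\<And>a. a \<in> A \<Longrightarrow> f a \<in> H) \<Longrightarrow> sum f A \<in> H"
proof (induction A rule: infinite_finite_induct)
  case (infinite A) thus ?case using asg_0[OF H] by simp
next
  case empty thus ?case using asg_0[OF H] by simp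
next
  case (insert a A)
  have "f a \<in> H" "sum f A \<in> H" using insert by auto
  thus ?case using insert.hyps asg_add[OF H] by simp
qed
lemma asg_nsm: "add_subgroup H \<Longrightarrow> x \<in> H \<Longrightarrow> nsm k x \<in> H"
  unfolding nsm_def by (rule asg_sum) auto

lemma mult_on_0:
  fixes \<chi> :: "'g::monoid_add \<Rightarrow> 'a::field"
  assumes "0 \<in> H" "\<forall>x\<in>H. \<chi> x \<noteq> (0::'a::field)" "\<forall>x\<in>H. \<forall>y\<in>H. \<chi> (x + y) = \<chi> x * \<chi> y"
  shows "\<chi> 0 = 1"
proof -
  have "\<chi> (0 + 0) = \<chi> 0 * \<chi> 0" using assms(1,3) by blast
  moreover have "\<chi> 0 \<noteq> 0" using assms(1,2) by blast
  ultimately show ?thesis by simp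
qed

lemma mult_on_nsm:
  assumes "add_subgroup H" "\<forall>x\<in>H. \<chi> x \<noteq> (0::'a::field)" "\<forall>x\<in>H. \<forall>y\<in>H. \<chi> (x + y) = \<chi> x * \<chi> y"
    "h \<in> H"
  shows "\<chi> (nsm m h) = \<chi> h ^ m"
proof (induction m)
  case 0 thus ?case using mult_on_0[OF asg_0[OF assms(1)] assms(2,3)] by simp
next
  case (Suc m)
  have "\<chi> (nsm (Suc m) h) = \<chi> h * \<chi> (nsm m h)"
    unfolding nsm_Suc using assms asg_nsm by blast
  thus ?case using Suc by simp
qed

lemma is_char_mult: "is_char \<chi> \<Longrightarrow> \<chi> (x + y) = \<chi> x * \<chi> y" by (simp add: is_char_def)
lemma is_char_nz: "is_char \<chi> \<Longrightarrow> \<chi> x \<noteq> 0" by (simp add: is_char_def)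
lemma is_char_0: "is_char \<chi> \<Longrightarrow> \<chi> 0 = 1"
  by (rule mult_on_0[of UNIV]) (auto simp: is_char_def)
lemma is_char_neg: "is_char \<chi> \<Longrightarrow> \<chi> (- x) = inverse (\<chi> x)"
proof -
  assume c: "is_char \<chi>"
  have "\<chi> x * \<chi> (- x) = 1" using is_char_mult[OF c, of x "-x"] is_char_0[OF c] by simp
  thus ?thesis by (rule inverse_unique[symmetric])
qed
lemma is_char_diff: "is_char \<chi> \<Longrightarrow> \<chi> (x - y) = \<chi> x * inverse (\<chi> y)"
proof -
  assume c: "is_char \<chi>"
  have "\<chi> (x - y) = \<chi> (x + - y)" by simp
  also have "\<dots> = \<chi> x * \<chi> (- y)" by (rule is_char_mult[OF c])
  finally show ?thesis using is_char_neg[OF c] by simp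
qed
lemma is_char_nsm: "is_char \<chi> \<Longrightarrow> \<chi> (nsm k x) = \<chi> x ^ k"
  by (induction k) (auto simp: nsm_Suc is_char_mult is_char_0)

locale grp =
  fixes L' :: "'g::ab_group_add set"
  assumes sg: "add_subgroup L'" and finc: "finite ((\<lambda>x. (+) x ` L') ` UNIV)"
begin

definition cos :: "'g \<Rightarrow> 'g set" where "cos x = (+) x ` L'"
definition rep :: "'g \<Rightarrow> 'g" where "rep x = (SOME y. y \<in> cos x)"
definition R :: "'g set" where "R = range rep"
definition M :: nat where "M = subgroup_index L'"
definition chars :: "('g \<Rightarrow> 'k::{field,finite} alg_closure) set" where
  "chars = {\<chi>. is_char \<chi> \<and> (\<forall>l\<in>L'. \<chi> l = 1)}"

lemma L0: "0 \<in> L'" using asg_0[OF sg] .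
lemma Ladd: "x \<in> L' \<Longrightarrow> y \<in> L' \<Longrightarrow> x + y \<in> L'" using asg_add[OF sg] .
lemma Lneg: "- x \<in> L' \<longleftrightarrow> x \<in> L'" using asg_neg_iff[OF sg] .
lemma Ldiff: "x \<in> L' \<Longrightarrow> y \<in> L' \<Longrightarrow> x - y \<in> L'" using asg_diff[OF sg] .

lemma cos_eq_iff: "cos x = cos y \<longleftrightarrow> x - y \<in> L'"
proof
  assume "cos x = cos y"
  moreover have "y \<in> cos y" unfolding cos_def by (rule image_eqI[of _ _ 0]) (simp_all add: L0)
  ultimately obtain l where "l \<in> L'" "y = x + l" unfolding cos_def by auto
  hence "x - y = - l" by simp
  thus "x - y \<in> L'" using Lneg \<open>l \<in> L'\<close> by simp
next
  assume xy: "x - y \<in> L'"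
  have "cos u \<subseteq> cos v" if "u - v \<in> L'" for u v
  proof
    fix z assume "z \<in> cos u"
    then obtain l where l: "l \<in> L'" "z = u + l" unfolding cos_def by auto
    have "z = v + ((u - v) + l)" using l(2) by (simp add: algebra_simps)
    thus "z \<in> cos v" unfolding cos_def using Ladd[OF that l(1)] by (rule image_eqI)
  qed
  moreover have "y - x \<in> L'" using xy Lneg[of "x - y"] by simp
  ultimately show "cos x = cos y" using xy by blast
qed

lemma rep_diff: "rep x - x \<in> L'"
proof -
  have "x \<in> cos x" unfolding cos_def by (rule image_eqI[of _ _ 0]) (simp_all add: L0)
  hence "rep x \<in> cos x" unfolding rep_def by (rule someI)
  then obtain l where "l \<in> L'" "rep x = x + l" unfolding cos_def by auto
  thus ?thesis by simp
qed

lemma rep_eq_iff: "rep x = rep y \<longleftrightarrow> x - y \<in> L'"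
proof
  assume "rep x = rep y"
  hence "x - y = (rep y - y) - (rep x - x)" by (simp add: algebra_simps)
  moreover have "(rep y - y) - (rep x - x) \<in> L'" by (rule Ldiff[OF rep_diff rep_diff])
  ultimately show "x - y \<in> L'" by simp
next
  assume "x - y \<in> L'"
  hence "cos x = cos y" using cos_eq_iff by simp
  thus "rep x = rep y" unfolding rep_def by simp
qed

lemma rep_rep: "rep (rep x) = rep x" using rep_eq_iff[of "rep x" x] rep_diff[of x] by simp

lemma R_rep: "r \<in> R \<Longrightarrow> rep r = r" unfolding R_def using rep_rep by auto

lemma rep_in_R: "rep x \<in> R" unfolding R_def by simp

lemma R_alt: "R = (\<lambda>C. SOME y. y \<in> C) ` range cos"
  unfolding R_def rep_def by (simp add: image_image)

lemma finR: "finite R"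
proof -
  have "range cos = (\<lambda>x. (+) x ` L') ` UNIV" unfolding cos_def by simp
  thus ?thesis unfolding R_alt using finc by simp
qed

lemma card_R: "card R = M"
proof -
  have "inj_on (\<lambda>C. SOME y. y \<in> C) (range cos)"
  proof (rule inj_onI, clarify)
    fix x y assume "(SOME z. z \<in> cos x) = (SOME z. z \<in> cos y)"
    hence "rep x = rep y" unfolding rep_def .
    thus "cos x = cos y" using rep_eq_iff cos_eq_iff by simp
  qed
  hence "card R = card (range cos)" unfolding R_alt by (rule card_image)
  also have "range cos = (\<lambda>x. (+) x ` L') ` UNIV" unfolding cos_def by simp
  finally show ?thesis unfolding M_def subgroup_index_def .
qed

lemma M_pos: "M > 0"
proof -
  have "R \<noteq> {}" using rep_in_R by blast
  thus ?thesis by (simp add: card_R[symmetric] card_gt_0_iff finR)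
qed

lemma shift_inj: "inj_on (\<lambda>r. rep (r + y)) R"
proof (rule inj_onI)
  fix r r' assume "r \<in> R" "r' \<in> R" "rep (r + y) = rep (r' + y)"
  hence "r - r' \<in> L'" using rep_eq_iff by (simp add: algebra_simps)
  hence "rep r = rep r'" using rep_eq_iff by simp
  thus "r = r'" using R_rep \<open>r \<in> R\<close> \<open>r' \<in> R\<close> by simp
qed

lemma shift_img: "(\<lambda>r. rep (r + y)) ` R = R"
  by (rule endo_inj_surj[OF finR _ shift_inj]) (auto simp: rep_in_R)

lemma periodic_rep: "(\<forall>x. \<forall>l\<in>L'. \<phi> (x + l) = \<phi> x) \<Longrightarrow> \<phi> (rep z) = \<phi> z"
proof -
  assume per: "\<forall>x. \<forall>l\<in>L'. \<phi> (x + l) = \<phi> x"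
  have "\<phi> (z + (rep z - z)) = \<phi> z" using per rep_diff by blast
  thus ?thesis by simp
qed

lemma sum_shift:
  assumes per: "\<forall>x. \<forall>l\<in>L'. \<phi> (x + l) = \<phi> x"
  shows "(\<Sum>r\<in>R. \<phi> (r + y)) = (\<Sum>r\<in>R. \<phi> r)"
proof -
  have "(\<Sum>r\<in>R. \<phi> r) = (\<Sum>r\<in>(\<lambda>r. rep (r + y)) ` R. \<phi> r)" using shift_img by simp
  also have "\<dots> = (\<Sum>r\<in>R. \<phi> (rep (r + y)))" by (subst sum.reindex[OF shift_inj]) simp
  also have "\<dots> = (\<Sum>r\<in>R. \<phi> (r + y))" using periodic_rep[OF per] by simp
  finally show ?thesis by simp
qed

lemma nsm_M: "nsm M y \<in> L'"
proof -
  have "(\<Sum>r\<in>R. r) = (\<Sum>r\<in>(\<lambda>r. rep (r + y)) ` R. r)" using shift_img by simp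
  also have "\<dots> = (\<Sum>r\<in>R. rep (r + y))" by (subst sum.reindex[OF shift_inj]) simp
  finally have e: "(\<Sum>r\<in>R. r) = (\<Sum>r\<in>R. rep (r + y))" .
  have "(\<Sum>r\<in>R. rep (r + y) - (r + y)) \<in> L'" by (rule asg_sum[OF sg]) (rule rep_diff)
  also have "(\<Sum>r\<in>R. rep (r + y) - (r + y)) = - nsm M y"
    unfolding sum_subtractf sum.distrib e[symmetric] sum_const_nsm[OF finR] card_R by simp
  finally show ?thesis using Lneg by simp
qed

lemma chars_char: "\<chi> \<in> chars \<Longrightarrow> is_char \<chi>" by (simp add: chars_def)
lemma chars_L: "\<chi> \<in> chars \<Longrightarrow> l \<in> L' \<Longrightarrow> \<chi> l = 1" by (simp add: chars_def)

lemma chars_periodic: "\<chi> \<in> chars \<Longrightarrow> \<forall>x. \<forall>l\<in>L'. \<chi> (x + l) = \<chi> x"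
  by (simp add: chars_def is_char_mult)

lemma chars_rep: "\<chi> \<in> chars \<Longrightarrow> \<chi> (rep x) = \<chi> x"
  by (rule periodic_rep[OF chars_periodic])

lemma chars_pow_M: "\<chi> \<in> chars \<Longrightarrow> \<chi> x ^ M = 1"
proof -
  assume c: "\<chi> \<in> chars"
  have "\<chi> x ^ M = \<chi> (nsm M x)" using is_char_nsm[OF chars_char[OF c]] by simp
  also have "\<dots> = 1" using chars_L[OF c nsm_M] .
  finally show ?thesis .
qed

lemma finite_chars: "finite (chars :: ('g \<Rightarrow> 'k::{field,finite} alg_closure) set)"
proof -
  have inj: "inj_on (\<lambda>\<chi>. restrict \<chi> R) (chars :: ('g \<Rightarrow> 'k alg_closure) set)"
  proof (rule inj_onI)
    fix \<chi> \<psi> :: "'g \<Rightarrow> 'k alg_closure"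
    assume c: "\<chi> \<in> chars" "\<psi> \<in> chars" and eq: "restrict \<chi> R = restrict \<psi> R"
    show "\<chi> = \<psi>"
    proof
      fix x
      have "restrict \<chi> R (rep x) = restrict \<psi> R (rep x)" using eq by simp
      hence "\<chi> (rep x) = \<psi> (rep x)" using rep_in_R by simp
      thus "\<chi> x = \<psi> x" using chars_rep[OF c(1)] chars_rep[OF c(2)] by simp
    qed
  qed
  have sub: "(\<lambda>\<chi>. restrict \<chi> R) ` (chars :: ('g \<Rightarrow> 'k alg_closure) set) \<subseteq> PiE R (\<lambda>_. {z. z ^ M = 1})"
  proof (rule image_subsetI)
    fix \<chi> :: "'g \<Rightarrow> 'k alg_closure" assume c: "\<chi> \<in> chars"
    show "restrict \<chi> R \<in> PiE R (\<lambda>_. {z. z ^ M = 1})" using chars_pow_M[OF c] by simp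
  qed
  have fin: "finite (PiE R (\<lambda>_. {z::'k alg_closure. z ^ M = 1}))"
    by (intro finite_PiE finR roots1_finite M_pos)
  show ?thesis by (rule finite_imageD[OF finite_subset[OF sub fin] inj])
qed

lemma frobs_chars: "\<chi> \<in> chars \<Longrightarrow> frobs i \<chi> \<in> chars"
  unfolding chars_def is_char_def frobs_def by (auto simp: power_mult_distrib)

lemma chars_per:
  assumes c: "(\<chi> :: 'g \<Rightarrow> 'k::{field,finite} alg_closure) \<in> chars"
  shows "\<exists>s>0. frobs s \<chi> = \<chi>"
proof -
  have "range (\<lambda>i. frobs i \<chi>) \<subseteq> chars" using frobs_chars[OF c] by auto
  hence fr: "finite (range (\<lambda>i. frobs i \<chi>))" by (rule finite_subset) (rule finite_chars)
  have "\<not> inj (\<lambda>i. frobs i \<chi>)"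
  proof
    assume "inj (\<lambda>i. frobs i \<chi>)"
    hence "finite (UNIV :: nat set)" using finite_imageD[OF fr] by blast
    thus False by simp
  qed
  then obtain i j where ij: "i \<noteq> j" "frobs i \<chi> = frobs j \<chi>" unfolding inj_def by auto
  have *: "frobs (b - a) \<chi> = \<chi>" if "a < b" "frobs a \<chi> = frobs b \<chi>" for a b
  proof -
    have "frobs b \<chi> = frobs a (frobs (b - a) \<chi>)" using that by (simp add: frobs_frobs)
    hence "frobs a (frobs (b - a) \<chi>) = frobs a \<chi>" using that(2) by (rule trans[OF sym sym])
    thus ?thesis by (rule frobs_inj)
  qed
  show ?thesis
  proof (cases "i < j")
    case True thus ?thesis using *[OF True ij(2)] by (intro exI[of _ "j - i"]) auto
  next
    case False hence "j < i" using ij by simp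
    thus ?thesis using *[OF \<open>j < i\<close> ij(2)[symmetric]] by (intro exI[of _ "i - j"]) auto
  qed
qed

lemma one_chars: "(\<lambda>_. 1) \<in> chars" by (simp add: chars_def is_char_def)

lemma mult_chars: "\<chi> \<in> chars \<Longrightarrow> \<psi> \<in> chars \<Longrightarrow> (\<lambda>x. \<chi> x * \<psi> x) \<in> chars"
  unfolding chars_def is_char_def by (simp add: mult_ac)

lemma orth1:
  assumes c: "\<chi> \<in> chars"
  shows "(\<Sum>r\<in>R. \<chi> r) = (if \<chi> = (\<lambda>_. 1) then of_nat M else 0)"
proof (cases "\<chi> = (\<lambda>_. 1)")
  case True thus ?thesis using card_R by simp
next
  case False
  then obtain y where y: "\<chi> y \<noteq> 1" by auto
  have "(\<Sum>r\<in>R. \<chi> r) = (\<Sum>r\<in>R. \<chi> (r + y))" using sum_shift[OF chars_periodic[OF c]] by simp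
  also have "\<dots> = (\<Sum>r\<in>R. \<chi> r) * \<chi> y"
    using is_char_mult[OF chars_char[OF c]] by (simp add: sum_distrib_right)
  finally have "(\<Sum>r\<in>R. \<chi> r) * (\<chi> y - 1) = 0" by (simp add: algebra_simps)
  thus ?thesis using y False by simp
qed

end



lemma nsm_dvd:
  assumes H: "add_subgroup H" and d0: "0 < d" and dH: "nsm d g \<in> H"
    and dmin: "\<forall>k. 0 < k \<and> k < d \<longrightarrow> nsm k g \<notin> H" and j: "nsm j g \<in> H"
  shows "d dvd j"
proof -
  have e: "j = j mod d + (j div d) * d" by simp
  have "nsm j g = nsm (j mod d) g + nsm (j div d) (nsm d g)"
    by (subst e) (simp only: nsm_add nsm_mult)
  hence "nsm (j mod d) g = nsm j g - nsm (j div d) (nsm d g)" by (simp add: algebra_simps)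
  also have "\<dots> \<in> H" by (rule asg_diff[OF H j asg_nsm[OF H dH]])
  finally have "nsm (j mod d) g \<in> H" .
  moreover have "j mod d < d" using d0 by simp
  ultimately have "j mod d = 0" using dmin by auto
  thus ?thesis by auto
qed

lemma ext_step:
  fixes \<chi> :: "'g::ab_group_add \<Rightarrow> 'a::field"
  assumes H: "add_subgroup H" and nz: "\<forall>x\<in>H. \<chi> x \<noteq> 0" and mu: "\<forall>x\<in>H. \<forall>y\<in>H. \<chi> (x + y) = \<chi> x * \<chi> y"
    and d0: "0 < d" and dH: "nsm d g \<in> H" and dmin: "\<forall>k. 0 < k \<and> k < d \<longrightarrow> nsm k g \<notin> H"
    and ze: "\<zeta> ^ d = \<chi> (nsm d g)"
  shows "\<exists>H' \<chi>'. add_subgroup H' \<and> H \<subseteq> H' \<and> g \<in> H' \<and> (\<forall>x\<in>H'. \<chi>' x \<noteq> 0)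
     \<and> (\<forall>x\<in>H'. \<forall>y\<in>H'. \<chi>' (x + y) = \<chi>' x * \<chi>' y) \<and> (\<forall>x\<in>H. \<chi>' x = \<chi> x) \<and> \<chi>' g = \<zeta>"
proof -
  have dvd: "nsm j g \<in> H \<Longrightarrow> d dvd j" for j using nsm_dvd[OF H d0 dH dmin] by blast
  have chi0: "\<chi> 0 = 1" by (rule mult_on_0[OF asg_0[OF H] nz mu])
  have chinsm: "h \<in> H \<Longrightarrow> \<chi> (nsm m h) = \<chi> h ^ m" for h m by (rule mult_on_nsm[OF H nz mu])
  have z0: "\<zeta> \<noteq> 0"
  proof
    assume "\<zeta> = 0"
    have "\<chi> (nsm d g) = \<zeta> ^ d" using ze by simp
    also have "\<dots> = 0" using \<open>\<zeta> = 0\<close> d0 by simp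
    finally show False using nz dH by blast
  qed
  have wd1: "\<chi> (x - nsm k g) * \<zeta> ^ k = \<chi> (x - nsm k' g) * \<zeta> ^ k'"
    if a: "x - nsm k g \<in> H" and b: "x - nsm k' g \<in> H" and kk: "k \<le> k'" for x k k'
  proof -
    define e where "e = k' - k"
    have k': "k' = k + e" using kk unfolding e_def by simp
    have ne: "nsm k' g = nsm k g + nsm e g" unfolding k' nsm_add ..
    have "nsm e g = (x - nsm k g) - (x - nsm k' g)" unfolding ne by (simp add: algebra_simps)
    also have "\<dots> \<in> H" by (rule asg_diff[OF H a b])
    finally have eH: "nsm e g \<in> H" .
    obtain m where m0: "e = d * m" using dvd[OF eH] by (rule dvdE)
    have m: "e = m * d" using m0 by simp
    have "\<chi> (nsm e g) = \<chi> (nsm m (nsm d g))" unfolding m nsm_mult ..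
    also have "\<dots> = \<chi> (nsm d g) ^ m" by (rule chinsm[OF dH])
    also have "\<dots> = \<zeta> ^ e" unfolding ze[symmetric] m by (simp add: power_mult mult.commute)
    finally have ce: "\<chi> (nsm e g) = \<zeta> ^ e" .
    have "x - nsm k g = (x - nsm k' g) + nsm e g" unfolding ne by (simp add: algebra_simps)
    hence "\<chi> (x - nsm k g) = \<chi> ((x - nsm k' g) + nsm e g)" by (rule arg_cong)
    also have "\<dots> = \<chi> (x - nsm k' g) * \<chi> (nsm e g)" using mu b eH by blast
    finally have "\<chi> (x - nsm k g) = \<chi> (x - nsm k' g) * \<chi> (nsm e g)" .
    thus ?thesis unfolding ce k' by (simp add: power_add mult_ac)
  qed
  have wd: "\<chi> (x - nsm k g) * \<zeta> ^ k = \<chi> (x - nsm k' g) * \<zeta> ^ k'"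
    if a: "x - nsm k g \<in> H" and b: "x - nsm k' g \<in> H" for x k k'
  proof (cases "k \<le> k'")
    case True thus ?thesis using wd1[OF a b] by simp
  next
    case False thus ?thesis using wd1[OF b a] by simp
  qed
  define H' where "H' = {h + nsm k g | h k. h \<in> H}"
  define \<chi>' where "\<chi>' x = (let k = (SOME k. x - nsm k g \<in> H) in \<chi> (x - nsm k g) * \<zeta> ^ k)" for x
  have val: "\<chi>' (h + nsm k g) = \<chi> h * \<zeta> ^ k" if h: "h \<in> H" for h k
  proof -
    define k0 where "k0 = (SOME k0. h + nsm k g - nsm k0 g \<in> H)"
    have ex: "h + nsm k g - nsm k g \<in> H" using h by simp
    have k0: "h + nsm k g - nsm k0 g \<in> H" unfolding k0_def by (rule someI[where P="\<lambda>k0. h + nsm k g - nsm k0 g \<in> H", OF ex])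
    have "\<chi>' (h + nsm k g) = \<chi> (h + nsm k g - nsm k0 g) * \<zeta> ^ k0"
      unfolding \<chi>'_def k0_def Let_def ..
    also have "\<dots> = \<chi> (h + nsm k g - nsm k g) * \<zeta> ^ k" by (rule wd[OF k0 ex])
    finally show ?thesis by simp
  qed
  have H'_iff: "x \<in> H' \<longleftrightarrow> (\<exists>h k. h \<in> H \<and> x = h + nsm k g)" for x unfolding H'_def by auto
  have sgH': "add_subgroup H'"
    unfolding add_subgroup_def
  proof (intro conjI ballI)
    show "0 \<in> H'" unfolding H'_iff using asg_0[OF H] by (intro exI[of _ 0]) simp
  next
    fix x y assume "x \<in> H'" "y \<in> H'"
    then obtain h k h' k' where hk: "h \<in> H" "x = h + nsm k g" "h' \<in> H" "y = h' + nsm k' g"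
      unfolding H'_iff by blast
    have "x + y = (h + h') + nsm (k + k') g" unfolding hk nsm_add by (simp add: algebra_simps)
    thus "x + y \<in> H'" unfolding H'_iff using asg_add[OF H hk(1,3)] by blast
  next
    fix x assume "x \<in> H'"
    then obtain h k where hk: "h \<in> H" "x = h + nsm k g" unfolding H'_iff by blast
    have e: "k * d = k * (d - 1) + k" using d0 by (cases d) auto
    have "nsm k (nsm d g) = nsm (k * (d - 1)) g + nsm k g"
      unfolding nsm_mult[symmetric] mult.commute[of k d] by (metis e mult.commute nsm_add)
    hence "- x = (- h - nsm k (nsm d g)) + nsm (k * (d - 1)) g" unfolding hk by (simp add: algebra_simps)
    moreover have "- h - nsm k (nsm d g) \<in> H" by (rule asg_diff[OF H asg_neg[OF H hk(1)] asg_nsm[OF H dH]])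
    ultimately show "- x \<in> H'" unfolding H'_iff by blast
  qed
  show ?thesis
  proof (intro exI[of _ H'] exI[of _ \<chi>'] conjI ballI)
    show "add_subgroup H'" by (rule sgH')
    show "H \<subseteq> H'"
    proof
      fix x assume "x \<in> H" thus "x \<in> H'" unfolding H'_iff by (intro exI[of _ x] exI[of _ 0]) simp
    qed
    show "g \<in> H'" unfolding H'_iff using asg_0[OF H] by (rule_tac exI[of _ 0], rule_tac exI[of _ 1]) (simp add: nsm_Suc)
    fix x assume "x \<in> H'"
    then obtain h k where hk: "h \<in> H" "x = h + nsm k g" unfolding H'_iff by blast
    show "\<chi>' x \<noteq> 0" unfolding hk val[OF hk(1)] using nz hk(1) z0 by simp
    fix y assume "y \<in> H'"
    then obtain h' k' where hk': "h' \<in> H" "y = h' + nsm k' g" unfolding H'_iff by blast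
    have "x + y = (h + h') + nsm (k + k') g" unfolding hk hk' nsm_add by (simp add: algebra_simps)
    hence "\<chi>' (x + y) = \<chi> (h + h') * \<zeta> ^ (k + k')" using val asg_add[OF H hk(1) hk'(1)] by simp
    also have "\<dots> = \<chi>' x * \<chi>' y" unfolding hk hk' val[OF hk(1)] val[OF hk'(1)]
      using mu hk(1) hk'(1) by (simp add: power_add mult_ac)
    finally show "\<chi>' (x + y) = \<chi>' x * \<chi>' y" .
  next
    fix x assume "x \<in> H"
    thus "\<chi>' x = \<chi> x" using val[of x 0] by simp
  next
    have "\<chi>' (0 + nsm 1 g) = \<chi> 0 * \<zeta> ^ 1" by (rule val[OF asg_0[OF H]])
    thus "\<chi>' g = \<zeta>" using chi0 by (simp add: nsm_Suc)
  qed
qed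

context grp begin

lemma ext_all:
  fixes \<chi> :: "'g \<Rightarrow> 'a::alg_closed_field"
  assumes S: "finite S" and H: "add_subgroup H" and LH: "L' \<subseteq> H"
    and nz: "\<forall>x\<in>H. \<chi> x \<noteq> 0" and mu: "\<forall>x\<in>H. \<forall>y\<in>H. \<chi> (x + y) = \<chi> x * \<chi> y"
  shows "\<exists>H' \<chi>'. add_subgroup H' \<and> H \<union> S \<subseteq> H' \<and> (\<forall>x\<in>H'. \<chi>' x \<noteq> 0)
     \<and> (\<forall>x\<in>H'. \<forall>y\<in>H'. \<chi>' (x + y) = \<chi>' x * \<chi>' y) \<and> (\<forall>x\<in>H. \<chi>' x = \<chi> x)"
  using S
proof (induction S rule: finite_induct)
  case empty
  show ?case using H nz mu by (intro exI[of _ H] exI[of _ \<chi>]) auto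
next
  case (insert g S)
  then obtain H1 and \<chi>1 :: "'g \<Rightarrow> 'a" where h1: "add_subgroup H1" "H \<union> S \<subseteq> H1" "\<forall>x\<in>H1. \<chi>1 x \<noteq> 0"
     "\<forall>x\<in>H1. \<forall>y\<in>H1. \<chi>1 (x + y) = \<chi>1 x * \<chi>1 y" "\<forall>x\<in>H. \<chi>1 x = \<chi> x" by blast
  define d where "d = (LEAST d. 0 < d \<and> nsm d g \<in> H1)"
  have exd: "\<exists>d. 0 < d \<and> nsm d g \<in> H1" using M_pos nsm_M LH h1(2) by blast
  have dprop: "0 < d \<and> nsm d g \<in> H1" unfolding d_def by (rule LeastI_ex[OF exd])
  have dmin: "\<forall>k. 0 < k \<and> k < d \<longrightarrow> nsm k g \<notin> H1" unfolding d_def using not_less_Least by blast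
  obtain \<zeta> where ze: "\<zeta> ^ d = \<chi>1 (nsm d g)" using nth_root_exists dprop by blast
  obtain H2 \<chi>2 where h2: "add_subgroup H2" "H1 \<subseteq> H2" "g \<in> H2" "\<forall>x\<in>H2. \<chi>2 x \<noteq> 0"
     "\<forall>x\<in>H2. \<forall>y\<in>H2. \<chi>2 (x + y) = \<chi>2 x * \<chi>2 y" "\<forall>x\<in>H1. \<chi>2 x = \<chi>1 x"
    using ext_step[OF h1(1) h1(3) h1(4) conjunct1[OF dprop] conjunct2[OF dprop] dmin ze] by blast
  show ?case
    using h1 h2 by (intro exI[of _ H2] exI[of _ \<chi>2]) auto
qed

lemma char_ext:
  fixes \<chi> :: "'g \<Rightarrow> 'k::{field,finite} alg_closure"
  assumes H: "add_subgroup H" and LH: "L' \<subseteq> H"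
    and nz: "\<forall>x\<in>H. \<chi> x \<noteq> 0" and mu: "\<forall>x\<in>H. \<forall>y\<in>H. \<chi> (x + y) = \<chi> x * \<chi> y"
    and tr: "\<forall>l\<in>L'. \<chi> l = 1"
  shows "\<exists>\<psi>\<in>chars. \<forall>x\<in>H. \<psi> x = \<chi> x"
proof -
  obtain H' \<psi> where h: "add_subgroup H'" "H \<union> R \<subseteq> H'" "\<forall>x\<in>H'. \<psi> x \<noteq> 0"
     "\<forall>x\<in>H'. \<forall>y\<in>H'. \<psi> (x + y) = \<psi> x * \<psi> y" "\<forall>x\<in>H. \<psi> x = \<chi> x"
    using ext_all[OF finR H LH nz mu] by blast
  have all: "x \<in> H'" for x
  proof -
    have "rep x \<in> H'" using h(2) rep_in_R by blast
    moreover have "rep x - x \<in> H'" using h(2) LH rep_diff by blast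
    ultimately have "rep x - (rep x - x) \<in> H'" by (rule asg_diff[OF h(1)])
    thus ?thesis by simp
  qed
  have "\<psi> \<in> chars" unfolding chars_def is_char_def using h(3,4,5) all tr LH by auto
  thus ?thesis using h(5) by blast
qed

lemma CHAR_not_dvd:
  assumes cop: "coprime M CHAR('k::{field,finite})" and dM: "d dvd M"
  shows "of_nat d \<noteq> (0::'k alg_closure)"
proof
  assume "of_nat d = (0::'k alg_closure)"
  hence "CHAR('k alg_closure) dvd d" by (simp add: of_nat_eq_0_iff_char_dvd)
  hence "CHAR('k) dvd M" using dvd_trans[OF _ dM] by simp
  hence "is_unit CHAR('k)" using cop by (meson coprime_common_divisor dvd_refl)
  hence "CHAR('k) = 1" by simp
  moreover have "of_nat CHAR('k) = (0::'k)" by (rule of_nat_CHAR)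
  ultimately show False by simp
qed

lemma separation:
  assumes cop: "coprime M CHAR('k::{field,finite})" and y: "y \<notin> L'"
  shows "\<exists>\<chi>\<in>(chars :: ('g \<Rightarrow> 'k alg_closure) set). \<chi> y \<noteq> 1"
proof -
  define d where "d = (LEAST d. 0 < d \<and> nsm d y \<in> L')"
  have exd: "\<exists>d. 0 < d \<and> nsm d y \<in> L'" using M_pos nsm_M by blast
  have dprop: "0 < d \<and> nsm d y \<in> L'" unfolding d_def by (rule LeastI_ex[OF exd])
  have dmin: "\<forall>k. 0 < k \<and> k < d \<longrightarrow> nsm k y \<notin> L'" unfolding d_def using not_less_Least by blast
  have dM: "d dvd M" using nsm_dvd[OF sg conjunct1[OF dprop] conjunct2[OF dprop] dmin nsm_M] .
  have "d \<noteq> 1" using dprop y by (auto simp: nsm_Suc)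
  hence d2: "d \<ge> 2" using dprop by simp
  have dnz: "of_nat d \<noteq> (0::'k alg_closure)" by (rule CHAR_not_dvd[OF cop dM])
  obtain \<zeta> :: "'k alg_closure" where z: "(\<Sum>k\<le>d - 1. 1 * \<zeta> ^ k) = 0"
    using alg_closed[of "d - 1" "\<lambda>_. 1 :: 'k alg_closure"] d2 by auto
  have "{..d - 1} = {..<d}" using d2 by auto
  hence zs: "(\<Sum>k<d. \<zeta> ^ k) = 0" using z by simp
  have z1: "\<zeta> \<noteq> 1"
  proof
    assume "\<zeta> = 1"
    hence "(\<Sum>k<d. \<zeta> ^ k) = of_nat d" by simp
    thus False using zs dnz by simp
  qed
  have zd: "\<zeta> ^ d = 1"
  proof -
    have "1 - \<zeta> ^ d = (1 - \<zeta>) * sum ((^) \<zeta>) {..<d}" by (rule one_diff_power_eq)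
    also have "\<dots> = 0" using zs by simp
    finally show ?thesis by simp
  qed
  obtain H1 and \<chi>1 :: "'g \<Rightarrow> 'k alg_closure" where h1: "add_subgroup H1" "L' \<subseteq> H1" "y \<in> H1"
     "\<forall>x\<in>H1. \<chi>1 x \<noteq> 0" "\<forall>x\<in>H1. \<forall>z\<in>H1. \<chi>1 (x + z) = \<chi>1 x * \<chi>1 z" "\<forall>x\<in>L'. \<chi>1 x = 1" "\<chi>1 y = \<zeta>"
    using ext_step[OF sg, of "\<lambda>_. 1" d y \<zeta>] dprop dmin zd by auto
  obtain \<psi> where p: "\<psi> \<in> chars" "\<forall>x\<in>H1. \<psi> x = \<chi>1 x"
    using char_ext[OF h1(1,2,4,5,6)] by blast
  have "\<psi> y \<noteq> 1" using p(2) h1(3,7) z1 by simp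
  thus ?thesis using p(1) by blast
qed

lemma orth2:
  assumes cop: "coprime M CHAR('k::{field,finite})"
  shows "(\<Sum>\<chi>\<in>(chars :: ('g \<Rightarrow> 'k alg_closure) set). \<chi> y) = (if y \<in> L' then of_nat (card (chars :: ('g \<Rightarrow> 'k alg_closure) set)) else 0)"
proof (cases "y \<in> L'")
  case True
  have "(\<Sum>\<chi>\<in>(chars :: ('g \<Rightarrow> 'k alg_closure) set). \<chi> y) = (\<Sum>\<chi>\<in>(chars :: ('g \<Rightarrow> 'k alg_closure) set). 1)"
    by (rule sum.cong[OF refl]) (simp add: chars_L True)
  thus ?thesis using True by simp
next
  case False
  obtain \<chi>0 :: "'g \<Rightarrow> 'k alg_closure" where c0: "\<chi>0 \<in> chars" "\<chi>0 y \<noteq> 1" using separation[OF cop False] by blast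
  define f where "f = (\<lambda>\<chi> :: 'g \<Rightarrow> 'k alg_closure. (\<lambda>x. \<chi>0 x * \<chi> x))"
  have inj: "inj_on f chars"
  proof (rule inj_onI)
    fix \<chi> \<psi> :: "'g \<Rightarrow> 'k alg_closure" assume "f \<chi> = f \<psi>"
    hence "\<chi>0 x * \<chi> x = \<chi>0 x * \<psi> x" for x unfolding f_def by meson
    thus "\<chi> = \<psi>" using is_char_nz[OF chars_char[OF c0(1)]] by (intro ext) simp
  qed
  have img: "f ` chars = chars"
    by (rule endo_inj_surj[OF finite_chars _ inj]) (auto simp: f_def intro: mult_chars[OF c0(1)])
  have "(\<Sum>\<chi>\<in>chars. \<chi> y) = (\<Sum>\<chi>\<in>f ` chars. \<chi> y)" using img by simp
  also have "\<dots> = (\<Sum>\<chi>\<in>chars. \<chi>0 y * \<chi> y)" by (subst sum.reindex[OF inj]) (simp add: f_def)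
  also have "\<dots> = \<chi>0 y * (\<Sum>\<chi>\<in>chars. \<chi> y)" by (simp add: sum_distrib_left)
  finally have "(\<chi>0 y - 1) * (\<Sum>\<chi>\<in>chars. \<chi> y) = 0" by (simp add: algebra_simps)
  thus ?thesis using False c0(2) by simp
qed

lemma R_L: "r \<in> R \<Longrightarrow> r \<in> L' \<longleftrightarrow> r = rep 0"
  using R_rep[of r] rep_eq_iff[of r 0] by auto

lemma card_chars:
  assumes cop: "coprime M CHAR('k::{field,finite})"
  shows "of_nat (card (chars :: ('g \<Rightarrow> 'k alg_closure) set)) = (of_nat M :: 'k alg_closure)"
proof -
  define N where "N = card (chars :: ('g \<Rightarrow> 'k alg_closure) set)"
  have "(\<Sum>\<chi>\<in>(chars :: ('g \<Rightarrow> 'k alg_closure) set). \<Sum>r\<in>R. \<chi> r)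
      = (\<Sum>\<chi>\<in>(chars :: ('g \<Rightarrow> 'k alg_closure) set). if \<chi> = (\<lambda>_. 1) then of_nat M else 0)"
    by (rule sum.cong[OF refl]) (rule orth1)
  also have "\<dots> = of_nat M" by (simp add: sum.delta[OF finite_chars] one_chars)
  finally have a: "(\<Sum>\<chi>\<in>(chars :: ('g \<Rightarrow> 'k alg_closure) set). \<Sum>r\<in>R. \<chi> r) = of_nat M" .
  have "(\<Sum>\<chi>\<in>(chars :: ('g \<Rightarrow> 'k alg_closure) set). \<Sum>r\<in>R. \<chi> r)
      = (\<Sum>r\<in>R. \<Sum>\<chi>\<in>(chars :: ('g \<Rightarrow> 'k alg_closure) set). \<chi> r)" by (rule sum.swap)
  also have "\<dots> = (\<Sum>r\<in>R. if r = rep 0 then of_nat N else 0)"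
    by (rule sum.cong[OF refl]) (simp add: orth2[OF cop] R_L N_def)
  also have "\<dots> = of_nat N" using finR rep_in_R by (simp add: sum.delta)
  finally show ?thesis using a N_def by simp
qed

lemma M_nz: "coprime M CHAR('k::{field,finite}) \<Longrightarrow> of_nat M \<noteq> (0::'k alg_closure)"
  by (rule CHAR_not_dvd) auto

lemma fourier:
  fixes F :: "'g \<Rightarrow> 'k::{field,finite} alg_closure"
  assumes cop: "coprime M CHAR('k)" and per: "\<forall>x. \<forall>l\<in>L'. F (x + l) = F x"
  shows "F x = inverse (of_nat M) * (\<Sum>r\<in>R. F r * (\<Sum>\<chi>\<in>(chars :: ('g \<Rightarrow> 'k alg_closure) set). \<chi> (x - r)))"
proof -
  have "(\<Sum>r\<in>R. F r * (\<Sum>\<chi>\<in>(chars :: ('g \<Rightarrow> 'k alg_closure) set). \<chi> (x - r)))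
      = (\<Sum>r\<in>R. if r = rep x then F r * of_nat M else 0)"
  proof (rule sum.cong[OF refl])
    fix r assume r: "r \<in> R"
    have "x - r \<in> L' \<longleftrightarrow> r = rep x" using rep_eq_iff[of x r] R_rep[OF r] by auto
    thus "F r * (\<Sum>\<chi>\<in>(chars :: ('g \<Rightarrow> 'k alg_closure) set). \<chi> (x - r)) = (if r = rep x then F r * of_nat M else 0)"
      using card_chars[OF cop] by (simp add: orth2[OF cop])
  qed
  also have "\<dots> = F (rep x) * of_nat M" using finR rep_in_R by (simp add: sum.delta)
  also have "F (rep x) = F x" by (rule periodic_rep[OF per])
  finally show ?thesis using M_nz[OF cop] by simp
qed

end


lemma sum_fun_apply: "(\<Sum>i\<in>A. f i) x = (\<Sum>i\<in>A. f i x)"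
  by (induction A rule: infinite_finite_induct) auto

lemma conv_fin:
  fixes b :: "'g::ab_group_add \<Rightarrow> 'r::comm_ring_1"
  assumes S: "finite S" and sub: "{k. b k \<noteq> 0} \<subseteq> S"
  shows "conv \<phi> b x = (\<Sum>k\<in>S. \<phi> (x - k) * b k)"
proof -
  have "conv \<phi> b x = Sum_any (\<lambda>h. \<phi> h * b (x - h))" unfolding conv_def ..
  also have "\<dots> = Sum_any (\<lambda>k. \<phi> (x - k) * b k)"
  proof (rule Sum_any.reindex_cong[of "\<lambda>k. x - k"])
    show "bij (\<lambda>k. x - k)" by (rule bij_betwI'[of _ _ _]) (auto intro: exI[of _ "x - _"])
    show "(\<lambda>h. \<phi> h * b (x - h)) \<circ> (\<lambda>k. x - k) = (\<lambda>k. \<phi> (x - k) * b k)" by (simp add: fun_eq_iff)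
  qed
  also have "\<dots> = (\<Sum>k\<in>S. \<phi> (x - k) * b k)"
    by (rule Sum_any.expand_superset[OF S]) (use sub in auto)
  finally show ?thesis .
qed

lemma conv_char:
  fixes B :: "'g::ab_group_add \<Rightarrow> 'k::field"
  assumes c: "is_char \<chi>" and S: "finite S" and sub: "{k. B k \<noteq> 0} \<subseteq> S"
  shows "conv \<chi> B x = \<chi> x * (\<Sum>k\<in>S. \<chi> (- k) * B k)"
proof -
  have "conv \<chi> B x = (\<Sum>k\<in>S. \<chi> (x - k) * B k)" by (rule conv_fin[OF S sub])
  also have "\<dots> = (\<Sum>k\<in>S. \<chi> x * (\<chi> (- k) * B k))"
  proof (rule sum.cong[OF refl])
    fix k
    have "\<chi> (x - k) = \<chi> (x + - k)" by simp
    also have "\<dots> = \<chi> x * \<chi> (- k)" by (rule is_char_mult[OF c])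
    finally show "\<chi> (x - k) * B k = \<chi> x * (\<chi> (- k) * B k)" by simp
  qed
  finally show ?thesis by (simp add: sum_distrib_left)
qed

definition Acoef :: "('g::ab_group_add \<Rightarrow> 'k::field alg_closure) \<Rightarrow> ('g \<Rightarrow> 'k) \<Rightarrow> 'k alg_closure" where
  "Acoef \<chi> b = (\<Sum>k\<in>{k. b k \<noteq> 0}. \<chi> (- k) * to_ac (b k))"

lemma conv_char_A:
  assumes c: "is_char \<chi>" and fin: "finite {k. b k \<noteq> 0}"
  shows "conv \<chi> (to_ac \<circ> b) x = \<chi> x * Acoef \<chi> b"
proof -
  have "conv \<chi> (to_ac \<circ> b) x = \<chi> x * (\<Sum>k\<in>{k. b k \<noteq> 0}. \<chi> (- k) * (to_ac \<circ> b) k)"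
    by (rule conv_char[OF c fin]) auto
  thus ?thesis unfolding Acoef_def by simp
qed

lemma harmonic_iff:
  assumes c: "is_char \<chi>" and fin: "\<forall>j<t. finite {k. a j k \<noteq> 0}"
  shows "harmonic t a \<chi> \<longleftrightarrow> (\<forall>j<t. Acoef \<chi> (a j) = 0)"
proof -
  have "conv \<chi> (to_ac \<circ> a j) = (\<lambda>_. 0) \<longleftrightarrow> Acoef \<chi> (a j) = 0" if j: "j < t" for j
  proof
    assume "conv \<chi> (to_ac \<circ> a j) = (\<lambda>_. 0)"
    hence "\<chi> 0 * Acoef \<chi> (a j) = 0" using conv_char_A[OF c, of "a j" 0] fin j by (metis)
    thus "Acoef \<chi> (a j) = 0" using is_char_nz[OF c] by simp
  next
    assume "Acoef \<chi> (a j) = 0"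
    thus "conv \<chi> (to_ac \<circ> a j) = (\<lambda>_. 0)" using conv_char_A[OF c, of "a j"] fin j by (simp add: fun_eq_iff)
  qed
  thus ?thesis unfolding harmonic_def by blast
qed

lemma to_ac_conv:
  assumes fin: "finite {k. b k \<noteq> 0}"
  shows "to_ac (conv f b x) = (\<Sum>k\<in>{k. b k \<noteq> 0}. to_ac (f (x - k)) * to_ac (b k))"
  unfolding conv_fin[OF fin subset_refl] to_ac_sum by simp

lemma conv_frobs:
  fixes \<chi> :: "'g::ab_group_add \<Rightarrow> 'k::{field,finite} alg_closure"
  assumes fin: "finite {k. b k \<noteq> 0}"
  shows "conv (frobs i \<chi>) (to_ac \<circ> b) x = (conv \<chi> (to_ac \<circ> b) x) ^ (CARD('k) ^ i)"
proof -
  have sub: "{k. (to_ac \<circ> b) k \<noteq> 0} \<subseteq> {k. b k \<noteq> 0}" by auto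
  show ?thesis
    unfolding conv_fin[OF fin sub] qpow_sum frobs_def
    by (simp add: power_mult_distrib to_ac_qpow)
qed

context grp begin

lemma frobs_harmonic:
  assumes fin: "\<forall>j<t. finite {k. a j k \<noteq> 0}" and h: "harmonic t a \<chi>"
  shows "harmonic t a (frobs i \<chi>)"
  unfolding harmonic_def
proof (intro allI impI)
  fix j assume j: "j < t"
  have "conv \<chi> (to_ac \<circ> a j) = (\<lambda>_. 0)" using h j unfolding harmonic_def by blast
  moreover have "CARD('b) ^ i > 0" by simp
  ultimately show "conv (frobs i \<chi>) (to_ac \<circ> a j) = (\<lambda>_. 0)"
    using conv_frobs[of "a j" i \<chi>] fin j by (simp add: fun_eq_iff)
qed

lemma kernel_coef:
  fixes f :: "'g \<Rightarrow> 'k::{field,finite}" and \<chi> :: "'g \<Rightarrow> 'k alg_closure"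
  assumes per: "\<forall>x. \<forall>l\<in>L'. f (x + l) = f x" and fin: "finite {k. b k \<noteq> 0}" and c: "\<chi> \<in> chars"
  shows "(\<Sum>x\<in>R. to_ac (conv f b x) * \<chi> (- x)) = (\<Sum>r\<in>R. to_ac (f r) * \<chi> (- r)) * Acoef \<chi> b"
proof -
  define S where "S = {k. b k \<noteq> 0}"
  define \<phi> where "\<phi> y = to_ac (f y) * \<chi> (- y)" for y
  have cc: "is_char \<chi>" using chars_char[OF c] .
  have perphi: "\<forall>x. \<forall>l\<in>L'. \<phi> (x + l) = \<phi> x"
  proof (intro allI ballI)
    fix x l assume l: "l \<in> L'"
    have "\<chi> (- (x + l)) = \<chi> (- x + - l)" by (simp add: algebra_simps)
    also have "\<dots> = \<chi> (- x) * \<chi> (- l)" by (rule is_char_mult[OF cc])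
    also have "\<chi> (- l) = 1" using chars_L[OF c] l Lneg by simp
    finally show "\<phi> (x + l) = \<phi> x" unfolding \<phi>_def using per l by simp
  qed
  have inner: "(\<Sum>x\<in>R. to_ac (f (x - k)) * \<chi> (- x)) = (\<Sum>r\<in>R. \<phi> r) * \<chi> (- k)" for k
  proof -
    have "(\<Sum>x\<in>R. to_ac (f (x - k)) * \<chi> (- x)) = (\<Sum>x\<in>R. \<phi> (x + - k) * \<chi> (- k))"
    proof (rule sum.cong[OF refl])
      fix x
      have "\<chi> (- x) = \<chi> (- (x + - k) + - k)" by (simp add: algebra_simps)
      also have "\<dots> = \<chi> (- (x + - k)) * \<chi> (- k)" by (rule is_char_mult[OF cc])
      finally show "to_ac (f (x - k)) * \<chi> (- x) = \<phi> (x + - k) * \<chi> (- k)"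
        unfolding \<phi>_def by (simp add: mult_ac)
    qed
    also have "\<dots> = (\<Sum>x\<in>R. \<phi> (x + - k)) * \<chi> (- k)" by (simp add: sum_distrib_right)
    also have "(\<Sum>x\<in>R. \<phi> (x + - k)) = (\<Sum>r\<in>R. \<phi> r)" by (rule sum_shift[OF perphi])
    finally show ?thesis .
  qed
  have "(\<Sum>x\<in>R. to_ac (conv f b x) * \<chi> (- x))
      = (\<Sum>x\<in>R. \<Sum>k\<in>S. to_ac (b k) * (to_ac (f (x - k)) * \<chi> (- x)))"
    unfolding to_ac_conv[OF fin] S_def by (simp add: sum_distrib_left sum_distrib_right mult_ac)
  also have "\<dots> = (\<Sum>k\<in>S. to_ac (b k) * (\<Sum>x\<in>R. to_ac (f (x - k)) * \<chi> (- x)))"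
    by (subst sum.swap) (simp add: sum_distrib_left)
  also have "\<dots> = (\<Sum>k\<in>S. (\<Sum>r\<in>R. \<phi> r) * (\<chi> (- k) * to_ac (b k)))"
    unfolding inner by (simp add: mult_ac)
  also have "\<dots> = (\<Sum>r\<in>R. \<phi> r) * Acoef \<chi> b"
    unfolding Acoef_def S_def by (simp add: sum_distrib_left)
  finally show ?thesis unfolding \<phi>_def .
qed

end


lemma fmod: "Modules.module (\<lambda>(c::'k::field) (f::'g \<Rightarrow> 'k) x. c * f x)"
  by unfold_locales (auto simp: fun_eq_iff algebra_simps)

context grp begin

lemma main:
  fixes a :: "nat \<Rightarrow> 'g \<Rightarrow> 'k::{field,finite}"
  assumes cop: "coprime M CHAR('k)" and fin: "\<forall>j<t. finite {x. a j x \<noteq> 0}"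
  shows "{f. (\<forall>x. \<forall>l\<in>L'. f (x + l) = f x) \<and> (\<forall>j<t. conv f (a j) = (\<lambda>_. 0))}
     = fspan {translate (TrK \<chi>) g | \<chi> g. is_char \<chi> \<and> harmonic t a \<chi> \<and> (\<forall>l\<in>L'. \<chi> l = 1)}"
    (is "?KS = fspan ?G")
proof -
  interpret V: Modules.module "\<lambda>(c::'k) (f::'g \<Rightarrow> 'k) x. c * f x" by (rule fmod)
  have Gchars: "\<chi> \<in> chars" if "is_char \<chi>" "\<forall>l\<in>L'. \<chi> l = 1" for \<chi> :: "'g \<Rightarrow> 'k alg_closure"
    using that unfolding chars_def by simp
  have convS: "conv f (a j) x = (\<Sum>k\<in>{k. a j k \<noteq> 0}. f (x - k) * a j k)" if "j < t" for f j x
    by (rule conv_fin) (use fin that in auto)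
  show ?thesis
  proof
    show "fspan ?G \<subseteq> ?KS"
    proof (rule V.span_minimal)
      show "V.subspace ?KS"
        unfolding V.subspace_def
      proof (intro conjI ballI allI)
        show "0 \<in> ?KS" by (simp add: convS fun_eq_iff)
      next
        fix f g assume "f \<in> ?KS" "g \<in> ?KS"
        thus "f + g \<in> ?KS"
          by (auto simp: convS fun_eq_iff sum.distrib distrib_right)
      next
        fix c :: 'k and f assume "f \<in> ?KS"
        thus "(\<lambda>x. c * f x) \<in> ?KS"
          by (auto simp: convS fun_eq_iff mult.assoc simp flip: sum_distrib_left)
      qed
    next
      show "?G \<subseteq> ?KS"
      proof (rule subsetI)
        fix F assume "F \<in> ?G"
        then obtain \<chi> :: "'g \<Rightarrow> 'k alg_closure" and g where FF: "F = translate (TrK \<chi>) g"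
          and c: "is_char \<chi>" and h: "harmonic t a \<chi>" and tr: "\<forall>l\<in>L'. \<chi> l = 1" by blast
        have cc: "\<chi> \<in> chars" by (rule Gchars[OF c tr])
        have per: "\<exists>s>0. frobs s \<chi> = \<chi>" by (rule chars_per[OF cc])
        have "translate (TrK \<chi>) g (x + l) = translate (TrK \<chi>) g x" if l: "l \<in> L'" for x l
        proof -
          have "\<chi> (x + l + g) = \<chi> (x + g)"
            using chars_periodic[OF cc] l by (metis add.commute add.left_commute)
          thus ?thesis unfolding translate_def TrK_def Tr_def by simp
        qed
        moreover have "conv (translate (TrK \<chi>) g) (a j) x = 0" if j: "j < t" for j x
        proof -
          define S where "S = {k. a j k \<noteq> 0}"
          have fS: "finite S" using fin j unfolding S_def by blast
          have "to_ac (conv (translate (TrK \<chi>) g) (a j) x)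
              = (\<Sum>k\<in>S. Tr \<chi> (x - k + g) * to_ac (a j k))"
            unfolding to_ac_conv[OF fS[unfolded S_def]] S_def translate_def to_ac_TrK[OF per] ..
          also have "\<dots> = (\<Sum>i<sper \<chi>. \<Sum>k\<in>S. frobs i \<chi> ((x + g) - k) * (to_ac \<circ> a j) k)"
            unfolding Tr_eq[OF per] by (subst sum.swap) (simp add: sum_distrib_left sum_distrib_right algebra_simps)
          also have "\<dots> = (\<Sum>i<sper \<chi>. conv (frobs i \<chi>) (to_ac \<circ> a j) (x + g))"
            by (rule sum.cong[OF refl], rule conv_fin[symmetric]) (use fS in \<open>auto simp: S_def\<close>)
          also have "\<dots> = 0"
            using frobs_harmonic[OF fin h] j unfolding harmonic_def by simp
          finally show ?thesis by simp
        qed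
        ultimately show "F \<in> ?KS" unfolding FF by (auto simp: fun_eq_iff)
      qed
    qed
  next
    show "?KS \<subseteq> fspan ?G"
    proof
      fix f assume "f \<in> ?KS"
      hence per: "\<forall>x. \<forall>l\<in>L'. f (x + l) = f x" and ker: "\<forall>j<t. conv f (a j) = (\<lambda>_. 0)" by auto
      define F where "F = (\<lambda>x. to_ac (f x))"
      define Hs where "Hs = {\<chi> \<in> (chars :: ('g \<Rightarrow> 'k alg_closure) set). harmonic t a \<chi>}"
      define T where "T = canon ` Hs"
      have Hs_sub: "Hs \<subseteq> chars" unfolding Hs_def by auto
      have finHs: "finite Hs" using finite_subset[OF Hs_sub finite_chars] .
      have Hs_cl: "\<chi> \<in> Hs \<Longrightarrow> frobs i \<chi> \<in> Hs" for \<chi> i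
        unfolding Hs_def using frobs_chars frobs_harmonic[OF fin] by blast
      have Hs_per: "\<chi> \<in> Hs \<Longrightarrow> \<exists>s>0. frobs s \<chi> = \<chi>" for \<chi> using chars_per Hs_sub by blast
      have T_sub: "T \<subseteq> Hs"
      proof
        fix \<rho> assume "\<rho> \<in> T"
        then obtain \<chi> where "\<chi> \<in> Hs" "\<rho> = canon \<chi>" unfolding T_def by blast
        thus "\<rho> \<in> Hs" using canon_in_orbit[of \<chi>] Hs_cl unfolding orbit_def by auto
      qed
      have perF: "\<forall>x. \<forall>l\<in>L'. F (x + l) = F x" using per unfolding F_def by simp
      have hat0: "(\<Sum>r\<in>R. F r * \<chi> (- r)) = 0" if c: "\<chi> \<in> chars" and nh: "\<chi> \<notin> Hs" for \<chi>
      proof -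
        have "\<not> harmonic t a \<chi>" using c nh unfolding Hs_def by simp
        then obtain j where j: "j < t" "Acoef \<chi> (a j) \<noteq> 0"
          using harmonic_iff[OF chars_char[OF c] fin] by blast
        have "(\<Sum>r\<in>R. F r * \<chi> (- r)) * Acoef \<chi> (a j) = (\<Sum>x\<in>R. to_ac (conv f (a j) x) * \<chi> (- x))"
          unfolding F_def using kernel_coef[OF per _ c, of "a j"] fin j by simp
        also have "\<dots> = 0" using ker j by simp
        finally show ?thesis using j(2) by simp
      qed
      have pt: "(\<Sum>r\<in>R. F r * \<chi> (x - r)) = \<chi> x * (\<Sum>r\<in>R. F r * \<chi> (- r))" if c: "\<chi> \<in> chars" for \<chi> x
      proof -
        have "\<chi> (x - r) = \<chi> x * \<chi> (- r)" for r
          using is_char_mult[OF chars_char[OF c], of x "- r"] by simp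
        thus ?thesis by (simp add: sum_distrib_left mult_ac)
      qed
      define c where "c r = inverse (of_nat M) * f r" for r
      have Fx: "F x = to_ac ((\<Sum>r\<in>R. \<Sum>\<rho>\<in>T. (\<lambda>y. c r * translate (TrK \<rho>) (- r) y)) x)" for x
      proof -
        have "F x = inverse (of_nat M) * (\<Sum>r\<in>R. F r * (\<Sum>\<chi>\<in>(chars :: ('g \<Rightarrow> 'k alg_closure) set). \<chi> (x - r)))"
          by (rule fourier[OF cop perF])
        also have "(\<Sum>r\<in>R. F r * (\<Sum>\<chi>\<in>(chars :: ('g \<Rightarrow> 'k alg_closure) set). \<chi> (x - r)))
            = (\<Sum>\<chi>\<in>(chars :: ('g \<Rightarrow> 'k alg_closure) set). \<Sum>r\<in>R. F r * \<chi> (x - r))"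
          by (simp add: sum_distrib_left sum.swap[of _ R])
        also have "\<dots> = (\<Sum>\<chi>\<in>Hs. \<Sum>r\<in>R. F r * \<chi> (x - r))"
          by (rule sum.mono_neutral_right[OF finite_chars Hs_sub]) (auto simp: pt hat0)
        also have "\<dots> = (\<Sum>r\<in>R. F r * (\<Sum>\<chi>\<in>Hs. \<chi> (x - r)))"
          by (simp add: sum_distrib_left sum.swap[of _ Hs])
        also have "\<dots> = (\<Sum>r\<in>R. F r * (\<Sum>\<rho>\<in>T. Tr \<rho> (x - r)))"
          unfolding T_def using orbit_decomp[OF finHs Hs_per Hs_cl] by simp
        also have "\<dots> = (\<Sum>r\<in>R. \<Sum>\<rho>\<in>T. F r * to_ac (TrK \<rho> (x + - r)))"
        proof -
          have "\<rho> \<in> T \<Longrightarrow> Tr \<rho> (x - r) = to_ac (TrK \<rho> (x + - r))" for \<rho> r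
            using to_ac_TrK[OF Hs_per, of \<rho> "x + - r"] T_sub by auto
          thus ?thesis by (simp add: sum_distrib_left)
        qed
        finally have "F x = inverse (of_nat M) * (\<Sum>r\<in>R. \<Sum>\<rho>\<in>T. F r * to_ac (TrK \<rho> (x + - r)))" .
        thus ?thesis
          unfolding sum_fun_apply F_def c_def translate_def to_ac_sum
          by (simp add: sum_distrib_left mult.assoc)
      qed
      have "f = (\<Sum>r\<in>R. \<Sum>\<rho>\<in>T. (\<lambda>y. c r * translate (TrK \<rho>) (- r) y))"
        using Fx unfolding F_def by (intro ext) simp
      also have "\<dots> \<in> fspan ?G"
      proof (intro V.span_sum)
        fix r \<rho> assume "\<rho> \<in> T"
        hence "\<rho> \<in> Hs" using T_sub by blast
        hence "is_char \<rho> \<and> harmonic t a \<rho> \<and> (\<forall>l\<in>L'. \<rho> l = 1)" unfolding Hs_def chars_def by simp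
        hence "translate (TrK \<rho>) (- r) \<in> ?G" by blast
        thus "(\<lambda>y. c r * translate (TrK \<rho>) (- r) y) \<in> fspan ?G" by (intro V.span_scale V.span_base)
      qed
      finally show "f \<in> fspan ?G" .
    qed
  qed
qed

end


theorem theorem4p4:
  shows
  "(\<forall>(t::nat) (a :: nat \<Rightarrow> 'g::{ab_group_add,finite} \<Rightarrow> 'k).
      coprime CARD('g) CHAR('k::{field,finite}) \<longrightarrow>
      {f :: 'g \<Rightarrow> 'k. \<forall>j<t. conv f (a j) = (\<lambda>_. 0)}
        = fspan {translate (TrK \<chi>) g | \<chi> g. is_char \<chi> \<and> harmonic t a \<chi>})
   \<and>
   (\<forall>(L' :: ('n::finite \<Rightarrow> int) set) (t::nat) (a :: nat \<Rightarrow> ('n \<Rightarrow> int) \<Rightarrow> 'k).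
      add_subgroup L' \<and> finite ((\<lambda>x. (+) x ` L') ` UNIV)
      \<and> coprime (subgroup_index L') CHAR('k::{field,finite})
      \<and> (\<forall>j<t. finite {x. a j x \<noteq> 0}) \<longrightarrow>
      {f :: ('n \<Rightarrow> int) \<Rightarrow> 'k. (\<forall>x. \<forall>l\<in>L'. f (x + l) = f x) \<and> (\<forall>j<t. conv f (a j) = (\<lambda>_. 0))}
        = fspan {translate (TrK \<chi>) g | \<chi> g. is_char \<chi> \<and> harmonic t a \<chi> \<and> (\<forall>l\<in>L'. \<chi> l = 1)})"
proof (intro conjI allI impI)
  fix t :: nat and a :: "nat \<Rightarrow> 'g::{ab_group_add,finite} \<Rightarrow> 'k::{field,finite}"
  assume cop: "coprime CARD('g) CHAR('k)"
  interpret G0: grp "{0::'g}" by unfold_locales (simp_all add: add_subgroup_def)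
  have "G0.M = card (range (\<lambda>x::'g. {x}))" unfolding G0.M_def subgroup_index_def by simp
  also have "\<dots> = CARD('g)" by (rule card_image) (simp add: inj_on_def)
  finally have M: "G0.M = CARD('g)" .
  have fin: "\<forall>j<t. finite {x. a j x \<noteq> 0}" by simp
  have eq: "G0.M = CARD('g)" by (rule M)
  have m: "{f. (\<forall>x. \<forall>l\<in>{0::'g}. f (x + l) = f x) \<and> (\<forall>j<t. conv f (a j) = (\<lambda>_. 0))}
     = fspan {translate (TrK \<chi>) g | \<chi> g. is_char \<chi> \<and> harmonic t a \<chi> \<and> (\<forall>l\<in>{0::'g}. \<chi> l = 1)}"
    by (rule G0.main) (use cop fin M in auto)
  have s1: "{f. (\<forall>x. \<forall>l\<in>{0::'g}. f (x + l) = f x) \<and> (\<forall>j<t. conv f (a j) = (\<lambda>_. 0))}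
      = {f :: 'g \<Rightarrow> 'k. \<forall>j<t. conv f (a j) = (\<lambda>_. 0)}" by simp
  have s2: "{translate (TrK \<chi>) g | \<chi> g. is_char \<chi> \<and> harmonic t a \<chi> \<and> (\<forall>l\<in>{0::'g}. \<chi> l = 1)}
      = {translate (TrK \<chi>) g | \<chi> g. is_char \<chi> \<and> harmonic t a \<chi>}"
    using is_char_0 by auto
  show "{f :: 'g \<Rightarrow> 'k. \<forall>j<t. conv f (a j) = (\<lambda>_. 0)}
        = fspan {translate (TrK \<chi>) g | \<chi> g. is_char \<chi> \<and> harmonic t a \<chi>}"
    using m unfolding s1 s2 .
next
  fix L' :: "('n::finite \<Rightarrow> int) set" and t :: nat and a :: "nat \<Rightarrow> ('n \<Rightarrow> int) \<Rightarrow> 'k::{field,finite}"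
  assume h: "add_subgroup L' \<and> finite ((\<lambda>x. (+) x ` L') ` UNIV)
      \<and> coprime (subgroup_index L') CHAR('k) \<and> (\<forall>j<t. finite {x. a j x \<noteq> 0})"
  interpret G1: grp L' using h by unfold_locales auto
  show "{f :: ('n \<Rightarrow> int) \<Rightarrow> 'k. (\<forall>x. \<forall>l\<in>L'. f (x + l) = f x) \<and> (\<forall>j<t. conv f (a j) = (\<lambda>_. 0))}
        = fspan {translate (TrK \<chi>) g | \<chi> g. is_char \<chi> \<and> harmonic t a \<chi> \<and> (\<forall>l\<in>L'. \<chi> l = 1)}"
    by (rule G1.main) (use h in \<open>auto simp: G1.M_def\<close>)
qed


end
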